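(* Let $P$ be an orthogonal polygon, let $p$ be a point in the interior of a pixel $\psi$ of $P$, and let $p'$ be any point of $\psi$ (possibly on the boundary of $\psi$). Then $G(p)\subseteq G(p')$. This holds under either of the two conventions (i), (ii) for $r$-guarding.
   Context: An orthogonal polygon $P$ is a closed connected region of the plane whose boundary consists of finitely many axis-parallel segments; it may have holes. The pixelation of $P$ is the partition of $P$ into rectangles obtained by shooting, from every reflex vertex of $P$, a horizontal and a vertical ray into the interior of $P$ until it hits the boundary of $P$; the resulting rectangles are called pixels. For points $g,p$, let $R(g,p)$ be the smallest closed axis-aligned rectangle containing $g$ and $p$. An axis-aligned rectangle $R\subseteq P$ is degenerate if it has area $0$ and there is no axis-aligned rectangle $R'$ of positive area with $R\subset R'\subseteq P$. Two conventions for $r$-guarding are considered: (i) $g$ $r$-guards $p$ iff $R(g,p)\subseteq P$; (ii) $g$ $r$-guards $p$ iff $R(g,p)\subseteq P$ and $R(g,p)$ is not degenerate. The guarding set $G(p)$ of a point $p\in P$ is the set of all points $g\in P$ that $r$-guard $p$. *)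

theory Defs
  imports "HOL-Analysis.Analysis"
begin

type_synonym pt = "real \<times> real"

definition axis_segment :: "pt set \<Rightarrow> bool" where
  "axis_segment s \<longleftrightarrow> (\<exists>a b. (fst a = fst b \<or> snd a = snd b) \<and> s = closed_segment a b)"

text \<open>Orthogonal polygon (possibly with holes): a compact connected region
 (closure of its connected interior) whose boundary is a finite union of
 axis-parallel segments.\<close>
definition orthogonal_polygon :: "pt set \<Rightarrow> bool" where
  "orthogonal_polygon P \<longleftrightarrow>
     compact P \<and> connected P \<and> P \<noteq> {} \<and> connected (interior P) \<and>
     closure (interior P) = P \<and>
     (\<exists>S. finite S \<and> (\<forall>s\<in>S. axis_segment s) \<and> frontier P = \<Union>S)"

text \<open>Reflex vertex: locally P is the complement of exactly one open quadrant at v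
 (interior angle 270 degrees).\<close>
definition reflex_vertex :: "pt set \<Rightarrow> pt \<Rightarrow> bool" where
  "reflex_vertex P v \<longleftrightarrow> v \<in> P \<and>
     (\<exists>e>0. \<exists>sx sy::real. sx \<in> {-1, 1} \<and> sy \<in> {-1, 1} \<and>
        (\<forall>q. dist q v < e \<longrightarrow>
           (q \<in> P \<longleftrightarrow> \<not> (sx * (fst q - fst v) > 0 \<and> sy * (snd q - snd v) > 0))))"

definition axis_dirs :: "pt set" where
  "axis_dirs = {(1,0), (-1,0), (0,1), (0,-1)}"

text \<open>The ray shot from v in direction d into the interior of P, up to (and including)
 the first point where it hits the boundary. If v + s d is not in the interior for small
 s > 0 (i.e. d points along a boundary edge), this is just {v}.\<close>
definition ray :: "pt set \<Rightarrow> pt \<Rightarrow> pt \<Rightarrow> pt set" where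
  "ray P v d = {v + t *\<^sub>R d | t. t \<ge> 0 \<and> (\<forall>s. 0 < s \<and> s < t \<longrightarrow> v + s *\<^sub>R d \<in> interior P)}"

definition cuts :: "pt set \<Rightarrow> pt set" where
  "cuts P = \<Union>{ray P v d | v d. reflex_vertex P v \<and> d \<in> axis_dirs}"

definition pixels :: "pt set \<Rightarrow> pt set set" where
  "pixels P = closure ` components (interior P - cuts P)"

definition rect :: "pt \<Rightarrow> pt \<Rightarrow> pt set" where
  "rect g p = {q. min (fst g) (fst p) \<le> fst q \<and> fst q \<le> max (fst g) (fst p) \<and>
                  min (snd g) (snd p) \<le> snd q \<and> snd q \<le> max (snd g) (snd p)}"

definition axis_rect :: "pt set \<Rightarrow> bool" where
  "axis_rect R \<longleftrightarrow> (\<exists>a1 b1 a2 b2. a1 \<le> b1 \<and> a2 \<le> b2 \<and>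
      R = {q. a1 \<le> fst q \<and> fst q \<le> b1 \<and> a2 \<le> snd q \<and> snd q \<le> b2})"

definition pos_area_rect :: "pt set \<Rightarrow> bool" where
  "pos_area_rect R \<longleftrightarrow> (\<exists>a1 b1 a2 b2. a1 < b1 \<and> a2 < b2 \<and>
      R = {q. a1 \<le> fst q \<and> fst q \<le> b1 \<and> a2 \<le> snd q \<and> snd q \<le> b2})"

definition degenerate :: "pt set \<Rightarrow> pt set \<Rightarrow> bool" where
  "degenerate P R \<longleftrightarrow> axis_rect R \<and> R \<subseteq> P \<and> \<not> pos_area_rect R \<and>
     \<not> (\<exists>R'. pos_area_rect R' \<and> R \<subset> R' \<and> R' \<subseteq> P)"

text \<open>Convention: ndeg = False is convention (i), ndeg = True is convention (ii).\<close>
definition rguards :: "bool \<Rightarrow> pt set \<Rightarrow> pt \<Rightarrow> pt \<Rightarrow> bool" where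
  "rguards ndeg P g p \<longleftrightarrow> rect g p \<subseteq> P \<and> (ndeg \<longrightarrow> \<not> degenerate P (rect g p))"

definition guarding_set :: "bool \<Rightarrow> pt set \<Rightarrow> pt \<Rightarrow> pt set" where
  "guarding_set ndeg P p = {g \<in> P. rguards ndeg P g p}"

end

theory Submission
  imports Defs
begin


lemma dfst: "\<bar>fst q - fst (v::pt)\<bar> \<le> dist q v"
  using dist_fst_le[of q v] by (simp add: dist_real_def)
lemma dsnd: "\<bar>snd q - snd (v::pt)\<bar> \<le> dist q v"
  using dist_snd_le[of q v] by (simp add: dist_real_def)
lemma dsum: "dist q (v::pt) \<le> \<bar>fst q - fst v\<bar> + \<bar>snd q - snd v\<bar>"
  unfolding dist_prod_def dist_real_def using sqrt_sum_squares_le_sum_abs by simp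

lemma op_closed: "orthogonal_polygon P \<Longrightarrow> closed P"
  unfolding orthogonal_polygon_def using compact_imp_closed by blast

lemma op_cl: "orthogonal_polygon P \<Longrightarrow> closure (interior P) = P"
  unfolding orthogonal_polygon_def by blast

lemma cross:
  assumes "orthogonal_polygon P"
  shows "\<exists>\<delta>>0. \<forall>z. dist z v < \<delta> \<longrightarrow> z \<in> frontier P \<longrightarrow> fst z = fst v \<or> snd z = snd v"
proof -
  obtain S where S: "finite S" "\<forall>s\<in>S. axis_segment s" "frontier P = \<Union>S"
    using assms unfolding orthogonal_polygon_def by blast
  let ?U = "\<Union>{s\<in>S. v \<notin> s}"
  have "closed ?U"
  proof (rule closed_Union)
    show "finite {s\<in>S. v \<notin> s}" using S by simp
    show "\<forall>s\<in>{s\<in>S. v \<notin> s}. closed s" using S(2) unfolding axis_segment_def by auto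
  qed
  moreover have "v \<notin> ?U" by blast
  ultimately obtain \<delta> where d: "\<delta> > 0" "ball v \<delta> \<subseteq> - ?U"
    using open_contains_ball_eq[of "- ?U" v] by auto
  show ?thesis
  proof (intro exI[of _ \<delta>] conjI allI impI)
    show "0 < \<delta>" using d by simp
  next
    fix z assume z: "dist z v < \<delta>" "z \<in> frontier P"
    then obtain s where s: "s \<in> S" "z \<in> s" using S by blast
    have "z \<notin> ?U" using d z by (auto simp: dist_commute)
    then have "v \<in> s" using s by blast
    from S(2) s obtain a b where ab: "fst a = fst b \<or> snd a = snd b" "s = closed_segment a b"
      unfolding axis_segment_def by blast
    have key: "\<And>w. w \<in> closed_segment a b \<Longrightarrow> (fst a = fst b \<longrightarrow> fst w = fst a) \<and> (snd a = snd b \<longrightarrow> snd w = snd a)"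
    proof -
      fix w assume "w \<in> closed_segment a b"
      then obtain u where "w = (1-u) *\<^sub>R a + u *\<^sub>R b" by (auto simp: closed_segment_def)
      then have "fst w = (1-u) * fst a + u * fst b" "snd w = (1-u) * snd a + u * snd b" by simp_all
      then show "(fst a = fst b \<longrightarrow> fst w = fst a) \<and> (snd a = snd b \<longrightarrow> snd w = snd a)"
        by (metis add_diff_cancel_left' diff_add_cancel distrib_right mult_1)
    qed
    show "fst z = fst v \<or> snd z = snd v"
      using key[of z] key[of v] ab s \<open>v \<in> s\<close> by auto
  qed
qed

definition quad :: "pt \<Rightarrow> real \<Rightarrow> real \<Rightarrow> real \<Rightarrow> pt set" where
  "quad v \<delta> a b = {q. dist q v < \<delta> \<and> 0 < a * (fst q - fst v) \<and> 0 < b * (snd q - snd v)}"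

lemma convex_quad: "convex (quad v \<delta> a b)"
proof -
  have e1: "{q::pt. 0 < a * (fst q - fst v)} = {q. inner (a,0) q > a * fst v}"
    by (auto simp: inner_prod_def algebra_simps)
  have e2: "{q::pt. 0 < b * (snd q - snd v)} = {q. inner (0,b) q > b * snd v}"
    by (auto simp: inner_prod_def algebra_simps)
  have "quad v \<delta> a b = ball v \<delta> \<inter> {q. 0 < a * (fst q - fst v)} \<inter> {q. 0 < b * (snd q - snd v)}"
    by (auto simp: quad_def dist_commute)
  then show ?thesis
    by (simp only: e1 e2) (intro convex_Int convex_ball convex_halfspace_gt)
qed

lemma quad_cases:
  assumes cr: "\<forall>z. dist z v < \<delta> \<longrightarrow> z \<in> frontier P \<longrightarrow> fst z = fst v \<or> snd z = snd v"
  shows "quad v \<delta> a b \<subseteq> P \<or> quad v \<delta> a b \<inter> P = {}"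
proof (rule ccontr)
  assume "\<not> ?thesis"
  then have "quad v \<delta> a b \<inter> P \<noteq> {}" "quad v \<delta> a b - P \<noteq> {}" by auto
  then have "quad v \<delta> a b \<inter> frontier P \<noteq> {}"
    by (rule connected_Int_frontier[OF convex_connected[OF convex_quad]])
  then obtain z where "z \<in> quad v \<delta> a b" "z \<in> frontier P" by blast
  then show False using cr[rule_format, of z] unfolding quad_def by auto
qed



lemma quad_in:
  assumes cr: "\<forall>z. dist z v < \<delta> \<longrightarrow> z \<in> frontier P \<longrightarrow> fst z = fst v \<or> snd z = snd v"
    and "w \<in> quad v \<delta> a b" "w \<in> P"
  shows "quad v \<delta> a b \<subseteq> P"
  using quad_cases[OF cr, of a b] assms(2,3) by blast

lemma quad_out:
  assumes cr: "\<forall>z. dist z v < \<delta> \<longrightarrow> z \<in> frontier P \<longrightarrow> fst z = fst v \<or> snd z = snd v"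
    and "w \<in> quad v \<delta> a b" "w \<notin> P"
  shows "quad v \<delta> a b \<inter> P = {}"
  using quad_cases[OF cr, of a b] assms(2,3) by blast

lemma sgn_sq: "s = 1 \<or> s = -1 \<Longrightarrow> s * s = (1::real)" by auto

lemma quad_v_upper:
  assumes cr: "\<forall>z. dist z v < \<delta> \<longrightarrow> z \<in> frontier P \<longrightarrow> fst z = fst v \<or> snd z = snd v"
    and dpos: "\<delta> > 0" and d\<rho>: "\<delta> \<le> \<rho>" and s: "s = 1 \<or> s = -1" and a: "a = 1 \<or> a = -1"
    and line: "\<forall>r. 0 < r \<and> r \<le> \<rho> \<longrightarrow> (fst v, snd v + s*r) \<in> interior P"
  shows "quad v \<delta> a s \<subseteq> P"
proof -
  define w where "w = (fst v, snd v + s*(\<delta>/2))"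
  have "w \<in> interior P" unfolding w_def using line[rule_format, of "\<delta>/2"] dpos d\<rho> by auto
  then obtain \<epsilon> where e: "\<epsilon> > 0" "ball w \<epsilon> \<subseteq> interior P"
    using open_contains_ball_eq[OF open_interior] by blast
  define h where "h = min \<epsilon> (\<delta>/4) / 2"
  have h: "h > 0" "h < \<epsilon>" "h < \<delta>/4" using e dpos by (auto simp: h_def)
  define w' where "w' = (fst v + a*h, snd v + s*(\<delta>/2))"
  have aa: "\<bar>a\<bar> = 1" "a*a = 1" using a by auto
  have ss: "\<bar>s\<bar> = 1" "s * s = 1" using s by auto
  have "dist w' w \<le> \<bar>a*h\<bar>" using dsum[of w' w] by (simp add: w'_def w_def)
  then have "dist w' w < \<epsilon>" using aa h by (simp add: abs_mult)
  then have "w' \<in> interior P" using e by (auto simp: dist_commute)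
  then have "w' \<in> P" using interior_subset by blast
  moreover have "w' \<in> quad v \<delta> a s"
  proof -
    have "dist w' v \<le> \<bar>a*h\<bar> + \<bar>s*(\<delta>/2)\<bar>" using dsum[of w' v] by (simp add: w'_def)
    also have "\<dots> = h + \<delta>/2" using aa ss h dpos by (simp add: abs_mult)
    finally have "dist w' v < \<delta>" using h by simp
    moreover have "0 < a * (fst w' - fst v)" using aa h by (simp add: w'_def mult.assoc[symmetric])
    moreover have "0 < s * (snd w' - snd v)" using ss dpos by (simp add: w'_def mult.assoc[symmetric])
    ultimately show ?thesis by (simp add: quad_def)
  qed
  ultimately show ?thesis using quad_in[OF cr] by blast
qed

lemma upper_v:
  assumes op: "orthogonal_polygon P"
    and cr: "\<forall>z. dist z v < \<delta> \<longrightarrow> z \<in> frontier P \<longrightarrow> fst z = fst v \<or> snd z = snd v"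
    and dpos: "\<delta> > 0" and d\<rho>: "\<delta> \<le> \<rho>" and s: "s = 1 \<or> s = -1"
    and line: "\<forall>r. 0 < r \<and> r \<le> \<rho> \<longrightarrow> (fst v, snd v + s*r) \<in> interior P"
    and vP: "v \<in> P"
  shows "\<forall>q. dist q v < \<delta> \<longrightarrow> 0 \<le> s*(snd q - snd v) \<longrightarrow> q \<in> P"
proof (intro allI impI)
  fix q assume q: "dist q v < \<delta>" "0 \<le> s*(snd q - snd v)"
  have ss: "s * s = 1" using s by auto
  have Q: "\<And>a. a = 1 \<or> a = -1 \<Longrightarrow> quad v \<delta> a s \<subseteq> P"
    using quad_v_upper[OF cr dpos d\<rho> s _ line] by blast
  have inq: "q \<in> P" if "fst q \<noteq> fst v" "0 < s*(snd q - snd v)" "dist q v < \<delta>" for q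
  proof -
    define a where "a = (if fst q > fst v then 1 else -1::real)"
    have "0 < a * (fst q - fst v)" using that(1) by (auto simp: a_def)
    then have "q \<in> quad v \<delta> a s" using that by (simp add: quad_def)
    moreover have "a = 1 \<or> a = -1" by (simp add: a_def)
    ultimately show ?thesis using Q[of a] by blast
  qed
  show "q \<in> P"
  proof (cases "fst q = fst v")
    case True
    show ?thesis
    proof (cases "snd q = snd v")
      case True
      then have "q = v" using \<open>fst q = fst v\<close> by (simp add: prod_eq_iff)
      then show ?thesis using vP by simp
    next
      case False
      then have r: "0 < s*(snd q - snd v)" using q(2) s by (auto simp: less_le)
      have "\<bar>snd q - snd v\<bar> < \<delta>" using dsnd[of q v] q(1) by linarith
      then have "s*(snd q - snd v) \<le> \<rho>" using s d\<rho> by auto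
      then have "(fst v, snd v + s*(s*(snd q - snd v))) \<in> interior P" using line r by blast
      moreover have "snd v + s*(s*(snd q - snd v)) = snd q"
        by (simp add: mult.assoc[symmetric] ss)
      ultimately show ?thesis using True interior_subset by (metis prod.collapse subsetD)
    qed
  next
    case False
    show ?thesis
    proof (cases "0 < s*(snd q - snd v)")
      case True
      then show ?thesis using inq False q by blast
    next
      case False2: False
      then have sq: "snd q = snd v" using q(2) s by auto
      have "\<forall>e>0. \<exists>y\<in>P. dist y q < e"
      proof (intro allI impI)
        fix e :: real assume e: "e > 0"
        define h where "h = min e (\<delta> - dist q v) / 2"
        have h: "h > 0" "h < e" "h < \<delta> - dist q v" using e q by (auto simp: h_def)
        define y where "y = (fst q, snd q + s*h)"
        have dy: "dist y q \<le> h" using dsum[of y q] s h by (auto simp: y_def)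
        have "dist y v \<le> dist y q + dist q v" by (rule dist_triangle)
        then have "dist y v < \<delta>" using dy h by linarith
        moreover have "0 < s*(snd y - snd v)" using sq ss h by (simp add: y_def mult.assoc[symmetric])
        moreover have "fst y \<noteq> fst v" using False by (simp add: y_def)
        ultimately have "y \<in> P" using inq by blast
        then show "\<exists>y\<in>P. dist y q < e" using dy h by force
      qed
      then show ?thesis using closed_approachable[OF op_closed[OF op]] by blast
    qed
  qed
qed



lemma frontier_in: "orthogonal_polygon P \<Longrightarrow> v \<in> frontier P \<Longrightarrow> v \<in> P"
  using frontier_subset_closed[OF op_closed] by blast

lemma reflex_v:
  assumes op: "orthogonal_polygon P" and vf: "v \<in> frontier P" and s: "s = 1 \<or> s = -1"
    and \<rho>: "\<rho> > 0"
    and line: "\<forall>r. 0 < r \<and> r \<le> \<rho> \<longrightarrow> (fst v, snd v + s*r) \<in> interior P"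
    and low: "\<forall>r. 0 < r \<and> r \<le> \<rho> \<longrightarrow> (fst v, snd v - s*r) \<in> P"
  shows "reflex_vertex P v"
proof -
  obtain \<delta>0 where d0: "\<delta>0 > 0" "\<forall>z. dist z v < \<delta>0 \<longrightarrow> z \<in> frontier P \<longrightarrow> fst z = fst v \<or> snd z = snd v"
    using cross[OF op] by blast
  define \<delta> where "\<delta> = min \<delta>0 \<rho>"
  have dpos: "\<delta> > 0" and d\<rho>: "\<delta> \<le> \<rho>" using d0 \<rho> by (auto simp: \<delta>_def)
  have cr: "\<forall>z. dist z v < \<delta> \<longrightarrow> z \<in> frontier P \<longrightarrow> fst z = fst v \<or> snd z = snd v"
    using d0 by (auto simp: \<delta>_def)
  have vP: "v \<in> P" using frontier_in[OF op vf] .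
  have ss: "s * s = 1" using s by auto
  have up: "\<forall>q. dist q v < \<delta> \<longrightarrow> 0 \<le> s*(snd q - snd v) \<longrightarrow> q \<in> P"
    using upper_v[OF op cr dpos d\<rho> s line vP] .
  have lowq: "q \<in> P" if "fst q = fst v" "0 < -s*(snd q - snd v)" "dist q v < \<delta>" for q
  proof -
    have "\<bar>snd q - snd v\<bar> < \<delta>" using dsnd[of q v] that(3) by linarith
    then have "-s*(snd q - snd v) \<le> \<rho>" using s d\<rho> by auto
    then have "(fst v, snd v - s*(-s*(snd q - snd v))) \<in> P" using low that(2) by blast
    moreover have "snd v - s*(-s*(snd q - snd v)) = snd v + (s * s)*(snd q - snd v)" by (simp add: algebra_simps)
    then have "snd v - s*(-s*(snd q - snd v)) = snd q" using ss by simp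
    ultimately show ?thesis using that(1) by (metis prod.collapse)
  qed
  have mixed: "\<exists>a0. (a0 = 1 \<or> a0 = -1) \<and> quad v \<delta> a0 (-s) \<inter> P = {} \<and> quad v \<delta> (-a0) (-s) \<subseteq> P"
  proof -
    have c1: "quad v \<delta> 1 (-s) \<subseteq> P \<or> quad v \<delta> 1 (-s) \<inter> P = {}" using quad_cases[OF cr] .
    have c2: "quad v \<delta> (-1) (-s) \<subseteq> P \<or> quad v \<delta> (-1) (-s) \<inter> P = {}" using quad_cases[OF cr] .
    have nb: False if b1: "quad v \<delta> 1 (-s) \<subseteq> P" and b2: "quad v \<delta> (-1) (-s) \<subseteq> P"
    proof -
      have "ball v \<delta> \<subseteq> P"
      proof
        fix q assume "q \<in> ball v \<delta>"
        then have q: "dist q v < \<delta>" by (simp add: dist_commute)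
        show "q \<in> P"
        proof (cases "0 \<le> s*(snd q - snd v)")
          case True then show ?thesis using up q by blast
        next
          case False
          then have n: "0 < -s*(snd q - snd v)" by simp
          show ?thesis
          proof (cases "fst q = fst v")
            case True then show ?thesis using lowq n q by blast
          next
            case False
            then have "q \<in> quad v \<delta> 1 (-s) \<or> q \<in> quad v \<delta> (-1) (-s)"
              using n q by (auto simp: quad_def)
            then show ?thesis using b1 b2 by blast
          qed
        qed
      qed
      then have "v \<in> interior P" using dpos interior_maximal[OF _ open_ball] by (metis centre_in_ball subsetD)
      then show False using vf by (simp add: frontier_def)
    qed
    have ne: False if b1: "quad v \<delta> 1 (-s) \<inter> P = {}" and b2: "quad v \<delta> (-1) (-s) \<inter> P = {}"
    proof -
      define w where "w = (fst v, snd v - s*(\<delta>/2))"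
      have "w \<in> P" using low[rule_format, of "\<delta>/2"] dpos d\<rho> by (simp add: w_def)
      then have "w \<in> closure (interior P)" using op_cl[OF op] by simp
      then obtain u where u: "u \<in> interior P" "dist u w < \<delta>/4"
        using closure_approachable[of w "interior P"] dpos by (metis divide_pos_pos zero_less_numeral)
      then obtain \<epsilon> where e: "\<epsilon> > 0" "ball u \<epsilon> \<subseteq> interior P"
        using open_contains_ball_eq[OF open_interior] by blast
      define h where "h = min \<epsilon> (\<delta>/8) / 2"
      have h: "h > 0" "h < \<epsilon>" "h < \<delta>/8" using e dpos by (auto simp: h_def)
      define u' where "u' = (if fst u = fst v then (fst v + h, snd u) else u)"
      have du: "dist u' u \<le> h"
      proof (cases "fst u = fst v")
        case True then show ?thesis using dsum[of u' u] h by (simp add: u'_def)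
      next
        case False then show ?thesis using h by (simp add: u'_def)
      qed
      then have "u' \<in> interior P" using e h by (auto simp: dist_commute)
      then have u'P: "u' \<in> P" using interior_subset by blast
      have f: "fst u' \<noteq> fst v" using h by (simp add: u'_def)
      have sn: "snd u' = snd u" by (simp add: u'_def)
      have "\<bar>snd u - snd w\<bar> < \<delta>/4" using dsnd[of u w] u(2) by linarith
      moreover have "-s*(snd w - snd v) = \<delta>/2" using ss by (simp add: w_def algebra_simps)
      moreover have "-s*(snd u - snd v) = -s*(snd u - snd w) + -s*(snd w - snd v)" by (simp add: algebra_simps)
      moreover have "\<bar>-s*(snd u - snd w)\<bar> = \<bar>snd u - snd w\<bar>" using s by auto
      ultimately have "0 < -s*(snd u - snd v)" by linarith
      then have neg: "0 < -s*(snd u' - snd v)" using sn by simp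
      have "dist u' v \<le> dist u' u + dist u w + dist w v" by (meson dist_triangle order_trans add_mono order_refl dist_triangle)
      moreover have "dist w v \<le> \<delta>/2" using dsum[of w v] s dpos by (auto simp: w_def)
      ultimately have "dist u' v < \<delta>" using du h u(2) by linarith
      then have "u' \<in> quad v \<delta> 1 (-s) \<or> u' \<in> quad v \<delta> (-1) (-s)" using f neg by (auto simp: quad_def)
      then show False using b1 b2 u'P by blast
    qed
    show ?thesis
    proof (cases "quad v \<delta> 1 (-s) \<subseteq> P")
      case True
      then have "quad v \<delta> (-1) (-s) \<inter> P = {}" using c2 nb by blast
      then show ?thesis using True by (intro exI[of _ "-1"]) simp
    next
      case False
      then have "quad v \<delta> 1 (-s) \<inter> P = {}" using c1 by blast
      moreover then have "quad v \<delta> (-1) (-s) \<subseteq> P" using c2 ne by blast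
      ultimately show ?thesis by (intro exI[of _ "1"]) simp
    qed
  qed
  then obtain a0 where a0: "a0 = 1 \<or> a0 = -1" "quad v \<delta> a0 (-s) \<inter> P = {}" "quad v \<delta> (-a0) (-s) \<subseteq> P"
    by blast
  have main: "\<forall>q. dist q v < \<delta> \<longrightarrow> ((q \<in> P) = (\<not> (0 < a0 * (fst q - fst v) \<and> 0 < - s * (snd q - snd v))))"
  proof (intro allI impI)
    fix q assume q: "dist q v < \<delta>"
    show "(q \<in> P) = (\<not> (0 < a0 * (fst q - fst v) \<and> 0 < - s * (snd q - snd v)))"
    proof
      assume "q \<in> P"
      then show "\<not> (0 < a0 * (fst q - fst v) \<and> 0 < - s * (snd q - snd v))"
        using a0(2) q by (auto simp: quad_def)
    next
      assume nq: "\<not> (0 < a0 * (fst q - fst v) \<and> 0 < - s * (snd q - snd v))"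
      show "q \<in> P"
      proof (cases "0 \<le> s*(snd q - snd v)")
        case True then show ?thesis using up q by blast
      next
        case False
        then have n: "0 < -s*(snd q - snd v)" by simp
        show ?thesis
        proof (cases "fst q = fst v")
          case True then show ?thesis using lowq n q by blast
        next
          case False
          then have "0 < -a0 * (fst q - fst v)" using nq n a0(1) by auto
          then have "q \<in> quad v \<delta> (-a0) (-s)" using n q by (simp add: quad_def)
          then show ?thesis using a0(3) by blast
        qed
      qed
    qed
  qed
  have "a0 \<in> {-1, 1}" "-s \<in> {-1, 1}" using a0 s by auto
  then show ?thesis unfolding reflex_vertex_def using vP dpos main by blast
qed



lemma quad_h_upper:
  assumes cr: "\<forall>z. dist z v < \<delta> \<longrightarrow> z \<in> frontier P \<longrightarrow> fst z = fst v \<or> snd z = snd v"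
    and dpos: "\<delta> > 0" and d\<rho>: "\<delta> \<le> \<rho>" and s: "s = 1 \<or> s = -1" and a: "a = 1 \<or> a = -1"
    and line: "\<forall>r. 0 < r \<and> r \<le> \<rho> \<longrightarrow> (fst v + s*r, snd v) \<in> interior P"
  shows "quad v \<delta> s a \<subseteq> P"
proof -
  define w where "w = (fst v + s*(\<delta>/2), snd v)"
  have "w \<in> interior P" unfolding w_def using line[rule_format, of "\<delta>/2"] dpos d\<rho> by auto
  then obtain \<epsilon> where e: "\<epsilon> > 0" "ball w \<epsilon> \<subseteq> interior P"
    using open_contains_ball_eq[OF open_interior] by blast
  define h where "h = min \<epsilon> (\<delta>/4) / 2"
  have h: "h > 0" "h < \<epsilon>" "h < \<delta>/4" using e dpos by (auto simp: h_def)
  define w' where "w' = (fst v + s*(\<delta>/2), snd v + a*h)"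
  have aa: "\<bar>a\<bar> = 1" "a*a = 1" using a by auto
  have ss: "\<bar>s\<bar> = 1" "s * s = 1" using s by auto
  have "dist w' w \<le> \<bar>a*h\<bar>" using dsum[of w' w] by (simp add: w'_def w_def)
  then have "dist w' w < \<epsilon>" using aa h by (simp add: abs_mult)
  then have "w' \<in> interior P" using e by (auto simp: dist_commute)
  then have "w' \<in> P" using interior_subset by blast
  moreover have "w' \<in> quad v \<delta> s a"
  proof -
    have "dist w' v \<le> \<bar>a*h\<bar> + \<bar>s*(\<delta>/2)\<bar>" using dsum[of w' v] by (simp add: w'_def)
    also have "\<dots> = h + \<delta>/2" using aa ss h dpos by (simp add: abs_mult)
    finally have "dist w' v < \<delta>" using h by simp
    moreover have "0 < a * (snd w' - snd v)" using aa h by (simp add: w'_def mult.assoc[symmetric])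
    moreover have "0 < s * (fst w' - fst v)" using ss dpos by (simp add: w'_def mult.assoc[symmetric])
    ultimately show ?thesis by (simp add: quad_def)
  qed
  ultimately show ?thesis using quad_in[OF cr] by blast
qed

lemma upper_h:
  assumes op: "orthogonal_polygon P"
    and cr: "\<forall>z. dist z v < \<delta> \<longrightarrow> z \<in> frontier P \<longrightarrow> fst z = fst v \<or> snd z = snd v"
    and dpos: "\<delta> > 0" and d\<rho>: "\<delta> \<le> \<rho>" and s: "s = 1 \<or> s = -1"
    and line: "\<forall>r. 0 < r \<and> r \<le> \<rho> \<longrightarrow> (fst v + s*r, snd v) \<in> interior P"
    and vP: "v \<in> P"
  shows "\<forall>q. dist q v < \<delta> \<longrightarrow> 0 \<le> s*(fst q - fst v) \<longrightarrow> q \<in> P"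
proof (intro allI impI)
  fix q assume q: "dist q v < \<delta>" "0 \<le> s*(fst q - fst v)"
  have ss: "s * s = 1" using s by auto
  have Q: "\<And>a. a = 1 \<or> a = -1 \<Longrightarrow> quad v \<delta> s a \<subseteq> P"
    using quad_h_upper[OF cr dpos d\<rho> s _ line] by blast
  have inq: "q \<in> P" if "snd q \<noteq> snd v" "0 < s*(fst q - fst v)" "dist q v < \<delta>" for q
  proof -
    define a where "a = (if snd q > snd v then 1 else -1::real)"
    have "0 < a * (snd q - snd v)" using that(1) by (auto simp: a_def)
    then have "q \<in> quad v \<delta> s a" using that by (simp add: quad_def)
    moreover have "a = 1 \<or> a = -1" by (simp add: a_def)
    ultimately show ?thesis using Q[of a] by blast
  qed
  show "q \<in> P"
  proof (cases "snd q = snd v")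
    case True
    show ?thesis
    proof (cases "fst q = fst v")
      case True
      then have "q = v" using \<open>snd q = snd v\<close> by (simp add: prod_eq_iff)
      then show ?thesis using vP by simp
    next
      case False
      then have r: "0 < s*(fst q - fst v)" using q(2) s by (auto simp: less_le)
      have "\<bar>fst q - fst v\<bar> < \<delta>" using dfst[of q v] q(1) by linarith
      then have "s*(fst q - fst v) \<le> \<rho>" using s d\<rho> by auto
      then have "(fst v + s*(s*(fst q - fst v)), snd v) \<in> interior P" using line r by blast
      moreover have "fst v + s*(s*(fst q - fst v)) = fst q"
        by (simp add: mult.assoc[symmetric] ss)
      ultimately show ?thesis using True interior_subset by (metis prod.collapse subsetD)
    qed
  next
    case False
    show ?thesis
    proof (cases "0 < s*(fst q - fst v)")
      case True
      then show ?thesis using inq False q by blast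
    next
      case False2: False
      then have sq: "fst q = fst v" using q(2) s by auto
      have "\<forall>e>0. \<exists>y\<in>P. dist y q < e"
      proof (intro allI impI)
        fix e :: real assume e: "e > 0"
        define h where "h = min e (\<delta> - dist q v) / 2"
        have h: "h > 0" "h < e" "h < \<delta> - dist q v" using e q by (auto simp: h_def)
        define y where "y = (fst q + s*h, snd q)"
        have dy: "dist y q \<le> h" using dsum[of y q] s h by (auto simp: y_def)
        have "dist y v \<le> dist y q + dist q v" by (rule dist_triangle)
        then have "dist y v < \<delta>" using dy h by linarith
        moreover have "0 < s*(fst y - fst v)" using sq ss h by (simp add: y_def mult.assoc[symmetric])
        moreover have "snd y \<noteq> snd v" using False by (simp add: y_def)
        ultimately have "y \<in> P" using inq by blast
        then show "\<exists>y\<in>P. dist y q < e" using dy h by force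
      qed
      then show ?thesis using closed_approachable[OF op_closed[OF op]] by blast
    qed
  qed
qed

lemma reflex_h:
  assumes op: "orthogonal_polygon P" and vf: "v \<in> frontier P" and s: "s = 1 \<or> s = -1"
    and \<rho>: "\<rho> > 0"
    and line: "\<forall>r. 0 < r \<and> r \<le> \<rho> \<longrightarrow> (fst v + s*r, snd v) \<in> interior P"
    and low: "\<forall>r. 0 < r \<and> r \<le> \<rho> \<longrightarrow> (fst v - s*r, snd v) \<in> P"
  shows "reflex_vertex P v"
proof -
  obtain \<delta>0 where d0: "\<delta>0 > 0" "\<forall>z. dist z v < \<delta>0 \<longrightarrow> z \<in> frontier P \<longrightarrow> fst z = fst v \<or> snd z = snd v"
    using cross[OF op] by blast
  define \<delta> where "\<delta> = min \<delta>0 \<rho>"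
  have dpos: "\<delta> > 0" and d\<rho>: "\<delta> \<le> \<rho>" using d0 \<rho> by (auto simp: \<delta>_def)
  have cr: "\<forall>z. dist z v < \<delta> \<longrightarrow> z \<in> frontier P \<longrightarrow> fst z = fst v \<or> snd z = snd v"
    using d0 by (auto simp: \<delta>_def)
  have vP: "v \<in> P" using frontier_in[OF op vf] .
  have ss: "s * s = 1" using s by auto
  have up: "\<forall>q. dist q v < \<delta> \<longrightarrow> 0 \<le> s*(fst q - fst v) \<longrightarrow> q \<in> P"
    using upper_h[OF op cr dpos d\<rho> s line vP] .
  have lowq: "q \<in> P" if "snd q = snd v" "0 < -s*(fst q - fst v)" "dist q v < \<delta>" for q
  proof -
    have "\<bar>fst q - fst v\<bar> < \<delta>" using dfst[of q v] that(3) by linarith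
    then have "-s*(fst q - fst v) \<le> \<rho>" using s d\<rho> by auto
    then have "(fst v - s*(-s*(fst q - fst v)), snd v) \<in> P" using low that(2) by blast
    moreover have "fst v - s*(-s*(fst q - fst v)) = fst v + (s * s)*(fst q - fst v)" by (simp add: algebra_simps)
    then have "fst v - s*(-s*(fst q - fst v)) = fst q" using ss by simp
    ultimately show ?thesis using that(1) by (metis prod.collapse)
  qed
  have mixed: "\<exists>a0. (a0 = 1 \<or> a0 = -1) \<and> quad v \<delta> (-s) a0 \<inter> P = {} \<and> quad v \<delta> (-s) (-a0) \<subseteq> P"
  proof -
    have c1: "quad v \<delta> (-s) 1 \<subseteq> P \<or> quad v \<delta> (-s) 1 \<inter> P = {}" using quad_cases[OF cr] .
    have c2: "quad v \<delta> (-s) (-1) \<subseteq> P \<or> quad v \<delta> (-s) (-1) \<inter> P = {}" using quad_cases[OF cr] .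
    have nb: False if b1: "quad v \<delta> (-s) 1 \<subseteq> P" and b2: "quad v \<delta> (-s) (-1) \<subseteq> P"
    proof -
      have "ball v \<delta> \<subseteq> P"
      proof
        fix q assume "q \<in> ball v \<delta>"
        then have q: "dist q v < \<delta>" by (simp add: dist_commute)
        show "q \<in> P"
        proof (cases "0 \<le> s*(fst q - fst v)")
          case True then show ?thesis using up q by blast
        next
          case False
          then have n: "0 < -s*(fst q - fst v)" by simp
          show ?thesis
          proof (cases "snd q = snd v")
            case True then show ?thesis using lowq n q by blast
          next
            case False
            then have "q \<in> quad v \<delta> (-s) 1 \<or> q \<in> quad v \<delta> (-s) (-1)"
              using n q by (auto simp: quad_def)
            then show ?thesis using b1 b2 by blast
          qed
        qed
      qed
      then have "v \<in> interior P" using dpos interior_maximal[OF _ open_ball] by (metis centre_in_ball subsetD)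
      then show False using vf by (simp add: frontier_def)
    qed
    have ne: False if b1: "quad v \<delta> (-s) 1 \<inter> P = {}" and b2: "quad v \<delta> (-s) (-1) \<inter> P = {}"
    proof -
      define w where "w = (fst v - s*(\<delta>/2), snd v)"
      have "w \<in> P" using low[rule_format, of "\<delta>/2"] dpos d\<rho> by (simp add: w_def)
      then have "w \<in> closure (interior P)" using op_cl[OF op] by simp
      then obtain u where u: "u \<in> interior P" "dist u w < \<delta>/4"
        using closure_approachable[of w "interior P"] dpos by (metis divide_pos_pos zero_less_numeral)
      then obtain \<epsilon> where e: "\<epsilon> > 0" "ball u \<epsilon> \<subseteq> interior P"
        using open_contains_ball_eq[OF open_interior] by blast
      define h where "h = min \<epsilon> (\<delta>/8) / 2"
      have h: "h > 0" "h < \<epsilon>" "h < \<delta>/8" using e dpos by (auto simp: h_def)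
      define u' where "u' = (if snd u = snd v then (fst u, snd v + h) else u)"
      have du: "dist u' u \<le> h"
      proof (cases "snd u = snd v")
        case True then show ?thesis using dsum[of u' u] h by (simp add: u'_def)
      next
        case False then show ?thesis using h by (simp add: u'_def)
      qed
      then have "u' \<in> interior P" using e h by (auto simp: dist_commute)
      then have u'P: "u' \<in> P" using interior_subset by blast
      have f: "snd u' \<noteq> snd v" using h by (simp add: u'_def)
      have sn: "fst u' = fst u" by (simp add: u'_def)
      have "\<bar>fst u - fst w\<bar> < \<delta>/4" using dfst[of u w] u(2) by linarith
      moreover have "-s*(fst w - fst v) = \<delta>/2" using ss by (simp add: w_def algebra_simps)
      moreover have "-s*(fst u - fst v) = -s*(fst u - fst w) + -s*(fst w - fst v)" by (simp add: algebra_simps)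
      moreover have "\<bar>-s*(fst u - fst w)\<bar> = \<bar>fst u - fst w\<bar>" using s by auto
      ultimately have "0 < -s*(fst u - fst v)" by linarith
      then have neg: "0 < -s*(fst u' - fst v)" using sn by simp
      have "dist u' v \<le> dist u' u + dist u w + dist w v" by (meson dist_triangle order_trans add_mono order_refl dist_triangle)
      moreover have "dist w v \<le> \<delta>/2" using dsum[of w v] s dpos by (auto simp: w_def)
      ultimately have "dist u' v < \<delta>" using du h u(2) by linarith
      then have "u' \<in> quad v \<delta> (-s) 1 \<or> u' \<in> quad v \<delta> (-s) (-1)" using f neg by (auto simp: quad_def)
      then show False using b1 b2 u'P by blast
    qed
    show ?thesis
    proof (cases "quad v \<delta> (-s) 1 \<subseteq> P")
      case True
      then have "quad v \<delta> (-s) (-1) \<inter> P = {}" using c2 nb by blast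
      then show ?thesis using True by (intro exI[of _ "-1"]) simp
    next
      case False
      then have "quad v \<delta> (-s) 1 \<inter> P = {}" using c1 by blast
      moreover then have "quad v \<delta> (-s) (-1) \<subseteq> P" using c2 ne by blast
      ultimately show ?thesis by (intro exI[of _ "1"]) simp
    qed
  qed
  then obtain a0 where a0: "a0 = 1 \<or> a0 = -1" "quad v \<delta> (-s) a0 \<inter> P = {}" "quad v \<delta> (-s) (-a0) \<subseteq> P"
    by blast
  have main: "\<forall>q. dist q v < \<delta> \<longrightarrow> ((q \<in> P) = (\<not> (0 < a0 * (snd q - snd v) \<and> 0 < - s * (fst q - fst v))))"
  proof (intro allI impI)
    fix q assume q: "dist q v < \<delta>"
    show "(q \<in> P) = (\<not> (0 < a0 * (snd q - snd v) \<and> 0 < - s * (fst q - fst v)))"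
    proof
      assume "q \<in> P"
      then show "\<not> (0 < a0 * (snd q - snd v) \<and> 0 < - s * (fst q - fst v))"
        using a0(2) q by (auto simp: quad_def)
    next
      assume nq: "\<not> (0 < a0 * (snd q - snd v) \<and> 0 < - s * (fst q - fst v))"
      show "q \<in> P"
      proof (cases "0 \<le> s*(fst q - fst v)")
        case True then show ?thesis using up q by blast
      next
        case False
        then have n: "0 < -s*(fst q - fst v)" by simp
        show ?thesis
        proof (cases "snd q = snd v")
          case True then show ?thesis using lowq n q by blast
        next
          case False
          then have "0 < -a0 * (snd q - snd v)" using nq n a0(1) by auto
          then have "q \<in> quad v \<delta> (-s) (-a0)" using n q by (simp add: quad_def)
          then show ?thesis using a0(3) by blast
        qed
      qed
    qed
  qed
  have "a0 \<in> {-1, 1}" "-s \<in> {-1, 1}" using a0 s by auto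
  moreover have R: "\<forall>q. dist q v < \<delta> \<longrightarrow> (q \<in> P \<longleftrightarrow> \<not> (0 < (-s) * (fst q - fst v) \<and> 0 < a0 * (snd q - snd v)))"
    using main by blast
  ultimately show ?thesis unfolding reflex_vertex_def using vP dpos by blast
qed




lemma P_minus_frontier: "orthogonal_polygon P \<Longrightarrow> q \<in> P \<Longrightarrow> q \<notin> frontier P \<Longrightarrow> q \<in> interior P"
  using op_closed by (auto simp: frontier_def closure_closed)

lemma in_cuts: "reflex_vertex P v \<Longrightarrow> d \<in> axis_dirs \<Longrightarrow> x \<in> ray P v d \<Longrightarrow> x \<in> cuts P"
  unfolding cuts_def by blast

lemma seg_v:
  assumes op: "orthogonal_polygon P" and xi: "x \<in> interior P" and xc: "x \<notin> cuts P"
    and s: "s = 1 \<or> s = -1" and L: "0 \<le> L"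
    and segP: "\<forall>t. 0 \<le> t \<and> t \<le> L \<longrightarrow> (fst x, snd x - s*t) \<in> P"
  shows "\<exists>\<epsilon>>0. \<forall>q. \<bar>fst q - fst x\<bar> \<le> \<epsilon> \<longrightarrow> 0 \<le> s*(snd x - snd q) \<longrightarrow> s*(snd x - snd q) \<le> L \<longrightarrow> q \<in> P"
proof -
  have ss: "s * s = 1" using s by auto
  define f where "f = (\<lambda>t. (fst x, snd x - s*t))"
  define T where "T = {t. 0 \<le> t \<and> t \<le> L \<and> f t \<in> frontier P}"
  have xnf: "x \<notin> frontier P" using xi by (simp add: frontier_def)
  show ?thesis
  proof (cases "\<exists>t\<in>T. t < L")
    case True
    then obtain t1 where t1: "t1 \<in> T" "t1 < L" by blast
    have "closed (f -` frontier P)"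
      unfolding f_def by (rule continuous_closed_vimage[OF frontier_closed]) (intro continuous_intros)
    moreover have "T = {0..L} \<inter> f -` frontier P" unfolding T_def by auto
    ultimately have "closed T" using closed_Int[OF closed_atLeastAtMost] by metis
    moreover have "bdd_below T" unfolding T_def by (auto intro: bdd_belowI[of _ 0])
    ultimately have t0T: "Inf T \<in> T" using closed_contains_Inf t1 by blast
    define t0 where "t0 = Inf T"
    have t0le: "\<And>t. t \<in> T \<Longrightarrow> t0 \<le> t" unfolding t0_def using \<open>bdd_below T\<close> by (simp add: cInf_lower)
    have t0L: "t0 < L" using t0le[OF t1(1)] t1 by simp
    have t0nn: "0 \<le> t0" using t0T by (simp add: T_def t0_def)
    have "t0 \<noteq> 0"
    proof
      assume "t0 = 0"
      then have "f 0 \<in> frontier P" using t0T by (simp add: T_def t0_def)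
      then show False using xnf by (simp add: f_def)
    qed
    then have t0pos: "t0 > 0" using t0nn by simp
    have intr: "f t \<in> interior P" if "0 \<le> t" "t < t0" for t
    proof -
      have "f t \<in> P" using segP that t0L by (simp add: f_def)
      moreover have "f t \<notin> frontier P"
        using t0le[of t] that t0L by (auto simp: T_def)
      ultimately show ?thesis using P_minus_frontier[OF op] by blast
    qed
    define v where "v = f t0"
    have vf: "v \<in> frontier P" using t0T by (simp add: T_def v_def t0_def)
    define \<rho> where "\<rho> = min t0 (L - t0)"
    have \<rho>: "\<rho> > 0" using t0pos t0L by (simp add: \<rho>_def)
    have line: "\<forall>r. 0 < r \<and> r \<le> \<rho> \<longrightarrow> (fst v, snd v + s*r) \<in> interior P"
    proof (intro allI impI)
      fix r assume r: "0 < r \<and> r \<le> \<rho>"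
      have "f (t0 - r) \<in> interior P" using intr[of "t0 - r"] r by (simp add: \<rho>_def)
      moreover have "f (t0 - r) = (fst v, snd v + s*r)" by (simp add: f_def v_def algebra_simps)
      ultimately show "(fst v, snd v + s*r) \<in> interior P" by simp
    qed
    have low: "\<forall>r. 0 < r \<and> r \<le> \<rho> \<longrightarrow> (fst v, snd v - s*r) \<in> P"
    proof (intro allI impI)
      fix r assume r: "0 < r \<and> r \<le> \<rho>"
      have "f (t0 + r) \<in> P" using segP r t0nn by (simp add: \<rho>_def f_def)
      moreover have "f (t0 + r) = (fst v, snd v - s*r)" by (simp add: f_def v_def algebra_simps)
      ultimately show "(fst v, snd v - s*r) \<in> P" by simp
    qed
    have rv: "reflex_vertex P v" using reflex_v[OF op vf s \<rho> line low] .
    have dax: "(0, s) \<in> axis_dirs" using s by (auto simp: axis_dirs_def)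
    have "x \<in> ray P v (0, s)"
      unfolding ray_def
    proof (intro CollectI exI[of _ t0] conjI allI impI)
      show "x = v + t0 *\<^sub>R (0, s)" using ss by (simp add: v_def f_def prod_eq_iff)
      show "0 \<le> t0" by (rule t0nn)
      fix \<sigma> :: real assume "0 < \<sigma> \<and> \<sigma> < t0"
      then have "f (t0 - \<sigma>) \<in> interior P" using intr[of "t0 - \<sigma>"] by simp
      moreover have "f (t0 - \<sigma>) = v + \<sigma> *\<^sub>R (0, s)" by (simp add: f_def v_def algebra_simps)
      ultimately show "v + \<sigma> *\<^sub>R (0, s) \<in> interior P" by simp
    qed
    then have "x \<in> cuts P" using in_cuts[OF rv dax] by blast
    then show ?thesis using xc by blast
  next
    case False
    have intr: "f t \<in> interior P" if "0 \<le> t" "t < L" for t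
    proof -
      have "f t \<in> P" using segP that by (simp add: f_def)
      moreover have "f t \<notin> frontier P" using False that by (auto simp: T_def)
      ultimately show ?thesis using P_minus_frontier[OF op] by blast
    qed
    define w0 where "w0 = f L"
    have "\<exists>\<delta>>0. \<forall>q. dist q w0 < \<delta> \<longrightarrow> 0 \<le> s*(snd q - snd w0) \<longrightarrow> q \<in> P"
    proof (cases "w0 \<in> interior P")
      case True
      then obtain \<delta> where "\<delta> > 0" "ball w0 \<delta> \<subseteq> interior P"
        using open_contains_ball_eq[OF open_interior] by blast
      then have "\<forall>q. dist q w0 < \<delta> \<longrightarrow> q \<in> P" using interior_subset by (force simp: dist_commute)
      then show ?thesis using \<open>\<delta> > 0\<close> by blast
    next
      case False
      have w0P: "w0 \<in> P" using segP L by (simp add: w0_def f_def)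
      then have w0f: "w0 \<in> frontier P" using False P_minus_frontier[OF op] by blast
      have Lpos: "L > 0"
      proof (rule ccontr)
        assume "\<not> L > 0"
        then have "L = 0" using L by simp
        then have "w0 = x" by (simp add: w0_def f_def)
        then show False using False xi by simp
      qed
      obtain \<delta>0 where d0: "\<delta>0 > 0" "\<forall>z. dist z w0 < \<delta>0 \<longrightarrow> z \<in> frontier P \<longrightarrow> fst z = fst w0 \<or> snd z = snd w0"
        using cross[OF op] by blast
      define \<delta> where "\<delta> = min \<delta>0 L"
      have dpos: "\<delta> > 0" and dL: "\<delta> \<le> L" using d0 Lpos by (auto simp: \<delta>_def)
      have cr: "\<forall>z. dist z w0 < \<delta> \<longrightarrow> z \<in> frontier P \<longrightarrow> fst z = fst w0 \<or> snd z = snd w0"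
        using d0 by (auto simp: \<delta>_def)
      have line: "\<forall>r. 0 < r \<and> r \<le> L \<longrightarrow> (fst w0, snd w0 + s*r) \<in> interior P"
      proof (intro allI impI)
        fix r assume r: "0 < r \<and> r \<le> L"
        have "f (L - r) \<in> interior P" using intr[of "L - r"] r by simp
        moreover have "f (L - r) = (fst w0, snd w0 + s*r)" by (simp add: f_def w0_def algebra_simps)
        ultimately show "(fst w0, snd w0 + s*r) \<in> interior P" by simp
      qed
      show ?thesis using upper_v[OF op cr dpos dL s line w0P] dpos by blast
    qed
    then obtain \<delta> where d: "\<delta> > 0" "\<forall>q. dist q w0 < \<delta> \<longrightarrow> 0 \<le> s*(snd q - snd w0) \<longrightarrow> q \<in> P"
      by blast
    have K: "compact (f ` {0..L})"
      unfolding f_def by (rule compact_continuous_image[OF _ compact_Icc]) (intro continuous_intros)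
    have Ksub: "f ` {0..L} \<subseteq> \<Union>{interior P, ball w0 \<delta>}"
    proof
      fix z assume "z \<in> f ` {0..L}"
      then obtain t where t: "0 \<le> t" "t \<le> L" "z = f t" by auto
      show "z \<in> \<Union>{interior P, ball w0 \<delta>}"
      proof (cases "t < L")
        case True then show ?thesis using intr t by auto
      next
        case False then have "t = L" using t by simp
        then show ?thesis using t d(1) by (simp add: w0_def)
      qed
    qed
    obtain e where e: "e > 0" "\<And>z. z \<in> f ` {0..L} \<Longrightarrow> \<exists>G\<in>{interior P, ball w0 \<delta>}. ball z e \<subseteq> G"
      using Heine_Borel_lemma[OF K Ksub] by blast
    show ?thesis
    proof (intro exI[of _ "e/2"] conjI allI impI)
      show "e/2 > 0" using e by simp
      fix q assume q1: "\<bar>fst q - fst x\<bar> \<le> e/2" and q2: "0 \<le> s*(snd x - snd q)" and q3: "s*(snd x - snd q) \<le> L"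
      define t where "t = s*(snd x - snd q)"
      have "f t = (fst x, snd q)" using ss by (simp add: f_def t_def algebra_simps mult.assoc[symmetric])
      moreover have "f t \<in> f ` {0..L}" using q2 q3 by (simp add: t_def)
      ultimately obtain G where G: "G \<in> {interior P, ball w0 \<delta>}" "ball (fst x, snd q) e \<subseteq> G"
        using e(2) by metis
      have "dist q (fst x, snd q) \<le> \<bar>fst q - fst x\<bar>" using dsum[of q "(fst x, snd q)"] by simp
      then have "q \<in> ball (fst x, snd q) e" using q1 e by (simp add: dist_commute)
      then have qG: "q \<in> G" using G by blast
      show "q \<in> P"
      proof (cases "G = interior P")
        case True then show ?thesis using qG interior_subset by blast
      next
        case False
        then have "G = ball w0 \<delta>" using G by blast
        then have "dist q w0 < \<delta>" using qG by (simp add: dist_commute)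
        moreover have "s*(snd q - snd w0) = L - t"
          using ss by (simp add: w0_def f_def t_def algebra_simps mult.assoc[symmetric])
        moreover have "0 \<le> L - t" using q3 by (simp add: t_def)
        ultimately show ?thesis using d(2) by metis
      qed
    qed
  qed
qed



lemma seg_h:
  assumes op: "orthogonal_polygon P" and xi: "x \<in> interior P" and xc: "x \<notin> cuts P"
    and s: "s = 1 \<or> s = -1" and L: "0 \<le> L"
    and segP: "\<forall>t. 0 \<le> t \<and> t \<le> L \<longrightarrow> (fst x - s*t, snd x) \<in> P"
  shows "\<exists>\<epsilon>>0. \<forall>q. \<bar>snd q - snd x\<bar> \<le> \<epsilon> \<longrightarrow> 0 \<le> s*(fst x - fst q) \<longrightarrow> s*(fst x - fst q) \<le> L \<longrightarrow> q \<in> P"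
proof -
  have ss: "s * s = 1" using s by auto
  define f where "f = (\<lambda>t. (fst x - s*t, snd x))"
  define T where "T = {t. 0 \<le> t \<and> t \<le> L \<and> f t \<in> frontier P}"
  have xnf: "x \<notin> frontier P" using xi by (simp add: frontier_def)
  show ?thesis
  proof (cases "\<exists>t\<in>T. t < L")
    case True
    then obtain t1 where t1: "t1 \<in> T" "t1 < L" by blast
    have "closed (f -` frontier P)"
      unfolding f_def by (rule continuous_closed_vimage[OF frontier_closed]) (intro continuous_intros)
    moreover have "T = {0..L} \<inter> f -` frontier P" unfolding T_def by auto
    ultimately have "closed T" using closed_Int[OF closed_atLeastAtMost] by metis
    moreover have "bdd_below T" unfolding T_def by (auto intro: bdd_belowI[of _ 0])
    ultimately have t0T: "Inf T \<in> T" using closed_contains_Inf t1 by blast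
    define t0 where "t0 = Inf T"
    have t0le: "\<And>t. t \<in> T \<Longrightarrow> t0 \<le> t" unfolding t0_def using \<open>bdd_below T\<close> by (simp add: cInf_lower)
    have t0L: "t0 < L" using t0le[OF t1(1)] t1 by simp
    have t0nn: "0 \<le> t0" using t0T by (simp add: T_def t0_def)
    have "t0 \<noteq> 0"
    proof
      assume "t0 = 0"
      then have "f 0 \<in> frontier P" using t0T by (simp add: T_def t0_def)
      then show False using xnf by (simp add: f_def)
    qed
    then have t0pos: "t0 > 0" using t0nn by simp
    have intr: "f t \<in> interior P" if "0 \<le> t" "t < t0" for t
    proof -
      have "f t \<in> P" using segP that t0L by (simp add: f_def)
      moreover have "f t \<notin> frontier P"
        using t0le[of t] that t0L by (auto simp: T_def)
      ultimately show ?thesis using P_minus_frontier[OF op] by blast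
    qed
    define v where "v = f t0"
    have vf: "v \<in> frontier P" using t0T by (simp add: T_def v_def t0_def)
    define \<rho> where "\<rho> = min t0 (L - t0)"
    have \<rho>: "\<rho> > 0" using t0pos t0L by (simp add: \<rho>_def)
    have line: "\<forall>r. 0 < r \<and> r \<le> \<rho> \<longrightarrow> (fst v + s*r, snd v) \<in> interior P"
    proof (intro allI impI)
      fix r assume r: "0 < r \<and> r \<le> \<rho>"
      have "f (t0 - r) \<in> interior P" using intr[of "t0 - r"] r by (simp add: \<rho>_def)
      moreover have "f (t0 - r) = (fst v + s*r, snd v)" by (simp add: f_def v_def algebra_simps)
      ultimately show "(fst v + s*r, snd v) \<in> interior P" by simp
    qed
    have low: "\<forall>r. 0 < r \<and> r \<le> \<rho> \<longrightarrow> (fst v - s*r, snd v) \<in> P"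
    proof (intro allI impI)
      fix r assume r: "0 < r \<and> r \<le> \<rho>"
      have "f (t0 + r) \<in> P" using segP r t0nn by (simp add: \<rho>_def f_def)
      moreover have "f (t0 + r) = (fst v - s*r, snd v)" by (simp add: f_def v_def algebra_simps)
      ultimately show "(fst v - s*r, snd v) \<in> P" by simp
    qed
    have rv: "reflex_vertex P v" using reflex_h[OF op vf s \<rho> line low] .
    have dax: "(s, 0) \<in> axis_dirs" using s by (auto simp: axis_dirs_def)
    have "x \<in> ray P v (s, 0)"
      unfolding ray_def
    proof (intro CollectI exI[of _ t0] conjI allI impI)
      show "x = v + t0 *\<^sub>R (s, 0)" using ss by (simp add: v_def f_def prod_eq_iff)
      show "0 \<le> t0" by (rule t0nn)
      fix \<sigma> :: real assume "0 < \<sigma> \<and> \<sigma> < t0"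
      then have "f (t0 - \<sigma>) \<in> interior P" using intr[of "t0 - \<sigma>"] by simp
      moreover have "f (t0 - \<sigma>) = v + \<sigma> *\<^sub>R (s, 0)" by (simp add: f_def v_def algebra_simps)
      ultimately show "v + \<sigma> *\<^sub>R (s, 0) \<in> interior P" by simp
    qed
    then have "x \<in> cuts P" using in_cuts[OF rv dax] by blast
    then show ?thesis using xc by blast
  next
    case False
    have intr: "f t \<in> interior P" if "0 \<le> t" "t < L" for t
    proof -
      have "f t \<in> P" using segP that by (simp add: f_def)
      moreover have "f t \<notin> frontier P" using False that by (auto simp: T_def)
      ultimately show ?thesis using P_minus_frontier[OF op] by blast
    qed
    define w0 where "w0 = f L"
    have "\<exists>\<delta>>0. \<forall>q. dist q w0 < \<delta> \<longrightarrow> 0 \<le> s*(fst q - fst w0) \<longrightarrow> q \<in> P"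
    proof (cases "w0 \<in> interior P")
      case True
      then obtain \<delta> where "\<delta> > 0" "ball w0 \<delta> \<subseteq> interior P"
        using open_contains_ball_eq[OF open_interior] by blast
      then have "\<forall>q. dist q w0 < \<delta> \<longrightarrow> q \<in> P" using interior_subset by (force simp: dist_commute)
      then show ?thesis using \<open>\<delta> > 0\<close> by blast
    next
      case False
      have w0P: "w0 \<in> P" using segP L by (simp add: w0_def f_def)
      then have w0f: "w0 \<in> frontier P" using False P_minus_frontier[OF op] by blast
      have Lpos: "L > 0"
      proof (rule ccontr)
        assume "\<not> L > 0"
        then have "L = 0" using L by simp
        then have "w0 = x" by (simp add: w0_def f_def)
        then show False using False xi by simp
      qed
      obtain \<delta>0 where d0: "\<delta>0 > 0" "\<forall>z. dist z w0 < \<delta>0 \<longrightarrow> z \<in> frontier P \<longrightarrow> fst z = fst w0 \<or> snd z = snd w0"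
        using cross[OF op] by blast
      define \<delta> where "\<delta> = min \<delta>0 L"
      have dpos: "\<delta> > 0" and dL: "\<delta> \<le> L" using d0 Lpos by (auto simp: \<delta>_def)
      have cr: "\<forall>z. dist z w0 < \<delta> \<longrightarrow> z \<in> frontier P \<longrightarrow> fst z = fst w0 \<or> snd z = snd w0"
        using d0 by (auto simp: \<delta>_def)
      have line: "\<forall>r. 0 < r \<and> r \<le> L \<longrightarrow> (fst w0 + s*r, snd w0) \<in> interior P"
      proof (intro allI impI)
        fix r assume r: "0 < r \<and> r \<le> L"
        have "f (L - r) \<in> interior P" using intr[of "L - r"] r by simp
        moreover have "f (L - r) = (fst w0 + s*r, snd w0)" by (simp add: f_def w0_def algebra_simps)
        ultimately show "(fst w0 + s*r, snd w0) \<in> interior P" by simp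
      qed
      show ?thesis using upper_h[OF op cr dpos dL s line w0P] dpos by blast
    qed
    then obtain \<delta> where d: "\<delta> > 0" "\<forall>q. dist q w0 < \<delta> \<longrightarrow> 0 \<le> s*(fst q - fst w0) \<longrightarrow> q \<in> P"
      by blast
    have K: "compact (f ` {0..L})"
      unfolding f_def by (rule compact_continuous_image[OF _ compact_Icc]) (intro continuous_intros)
    have Ksub: "f ` {0..L} \<subseteq> \<Union>{interior P, ball w0 \<delta>}"
    proof
      fix z assume "z \<in> f ` {0..L}"
      then obtain t where t: "0 \<le> t" "t \<le> L" "z = f t" by auto
      show "z \<in> \<Union>{interior P, ball w0 \<delta>}"
      proof (cases "t < L")
        case True then show ?thesis using intr t by auto
      next
        case False then have "t = L" using t by simp
        then show ?thesis using t d(1) by (simp add: w0_def)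
      qed
    qed
    obtain e where e: "e > 0" "\<And>z. z \<in> f ` {0..L} \<Longrightarrow> \<exists>G\<in>{interior P, ball w0 \<delta>}. ball z e \<subseteq> G"
      using Heine_Borel_lemma[OF K Ksub] by blast
    show ?thesis
    proof (intro exI[of _ "e/2"] conjI allI impI)
      show "e/2 > 0" using e by simp
      fix q assume q1: "\<bar>snd q - snd x\<bar> \<le> e/2" and q2: "0 \<le> s*(fst x - fst q)" and q3: "s*(fst x - fst q) \<le> L"
      define t where "t = s*(fst x - fst q)"
      have "f t = (fst q, snd x)" using ss by (simp add: f_def t_def algebra_simps mult.assoc[symmetric])
      moreover have "f t \<in> f ` {0..L}" using q2 q3 by (simp add: t_def)
      ultimately obtain G where G: "G \<in> {interior P, ball w0 \<delta>}" "ball (fst q, snd x) e \<subseteq> G"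
        using e(2) by metis
      have "dist q (fst q, snd x) \<le> \<bar>snd q - snd x\<bar>" using dsum[of q "(fst q, snd x)"] by simp
      then have "q \<in> ball (fst q, snd x) e" using q1 e by (simp add: dist_commute)
      then have qG: "q \<in> G" using G by blast
      show "q \<in> P"
      proof (cases "G = interior P")
        case True then show ?thesis using qG interior_subset by blast
      next
        case False
        then have "G = ball w0 \<delta>" using G by blast
        then have "dist q w0 < \<delta>" using qG by (simp add: dist_commute)
        moreover have "s*(fst q - fst w0) = L - t"
          using ss by (simp add: w0_def f_def t_def algebra_simps mult.assoc[symmetric])
        moreover have "0 \<le> L - t" using q3 by (simp add: t_def)
        ultimately show ?thesis using d(2) by metis
      qed
    qed
  qed
qed




lemma bs1: "min a b \<le> c \<Longrightarrow> c \<le> max a b \<Longrightarrow>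
   0 \<le> (if a \<le> b then 1 else -1::real)*(b - c) \<and> (if a \<le> b then 1 else -1)*(b - c) \<le> \<bar>b - a\<bar>"
  by (auto split: if_splits)
lemma bs2: "0 \<le> t \<Longrightarrow> t \<le> \<bar>b - a\<bar> \<Longrightarrow>
   min a b \<le> b - (if a \<le> b then 1 else -1::real)*t \<and> b - (if a \<le> b then 1 else -1::real)*t \<le> max a b"
  by (auto split: if_splits)
lemma sgn_cases: "(if a \<le> b then 1 else -1::real) = 1 \<or> (if a \<le> b then 1 else -1::real) = -1" by auto

lemma local_open:
  assumes op: "orthogonal_polygon P" and xi: "x \<in> interior P" and xc: "x \<notin> cuts P"
    and R: "rect g x \<subseteq> P"
  shows "\<exists>\<epsilon>>0. \<forall>y. dist y x < \<epsilon> \<longrightarrow> rect g y \<subseteq> P"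
proof -
  define sv where "sv = (if snd g \<le> snd x then 1 else -1::real)"
  define sh where "sh = (if fst g \<le> fst x then 1 else -1::real)"
  have segv: "\<forall>t. 0 \<le> t \<and> t \<le> \<bar>snd x - snd g\<bar> \<longrightarrow> (fst x, snd x - sv*t) \<in> P"
  proof (intro allI impI)
    fix t assume "0 \<le> t \<and> t \<le> \<bar>snd x - snd g\<bar>"
    then have "(fst x, snd x - sv*t) \<in> rect g x" using bs2[of t "snd x" "snd g"]
      by (auto simp: rect_def sv_def)
    then show "(fst x, snd x - sv*t) \<in> P" using R by blast
  qed
  have segh: "\<forall>t. 0 \<le> t \<and> t \<le> \<bar>fst x - fst g\<bar> \<longrightarrow> (fst x - sh*t, snd x) \<in> P"
  proof (intro allI impI)
    fix t assume "0 \<le> t \<and> t \<le> \<bar>fst x - fst g\<bar>"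
    then have "(fst x - sh*t, snd x) \<in> rect g x" using bs2[of t "fst x" "fst g"]
      by (auto simp: rect_def sh_def)
    then show "(fst x - sh*t, snd x) \<in> P" using R by blast
  qed
  obtain e1 where e1: "e1 > 0" "\<forall>q. \<bar>fst q - fst x\<bar> \<le> e1 \<longrightarrow> 0 \<le> sv*(snd x - snd q) \<longrightarrow> sv*(snd x - snd q) \<le> \<bar>snd x - snd g\<bar> \<longrightarrow> q \<in> P"
    using seg_v[OF op xi xc _ _ segv] sgn_cases by (auto simp: sv_def)
  obtain e2 where e2: "e2 > 0" "\<forall>q. \<bar>snd q - snd x\<bar> \<le> e2 \<longrightarrow> 0 \<le> sh*(fst x - fst q) \<longrightarrow> sh*(fst x - fst q) \<le> \<bar>fst x - fst g\<bar> \<longrightarrow> q \<in> P"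
    using seg_h[OF op xi xc _ _ segh] sgn_cases by (auto simp: sh_def)
  obtain e3 where e3: "e3 > 0" "ball x e3 \<subseteq> interior P"
    using xi open_contains_ball_eq[OF open_interior] by blast
  define \<epsilon> where "\<epsilon> = min (min e1 e2) (e3/2)"
  have epos: "\<epsilon> > 0" using e1 e2 e3 by (simp add: \<epsilon>_def)
  show ?thesis
  proof (intro exI[of _ \<epsilon>] conjI allI impI subsetI epos)
    fix y q assume y: "dist y x < \<epsilon>" and q: "q \<in> rect g y"
    have y1: "\<bar>fst y - fst x\<bar> < \<epsilon>" using dfst[of y x] y by linarith
    have y2: "\<bar>snd y - snd x\<bar> < \<epsilon>" using dsnd[of y x] y by linarith
    have q1: "min (fst g) (fst y) \<le> fst q" "fst q \<le> max (fst g) (fst y)"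
     and q2: "min (snd g) (snd y) \<le> snd q" "snd q \<le> max (snd g) (snd y)"
      using q by (auto simp: rect_def)
    show "q \<in> P"
    proof (cases "min (fst g) (fst x) \<le> fst q \<and> fst q \<le> max (fst g) (fst x)")
      case A1: True
      show ?thesis
      proof (cases "min (snd g) (snd x) \<le> snd q \<and> snd q \<le> max (snd g) (snd x)")
        case True
        then have "q \<in> rect g x" using A1 by (simp add: rect_def)
        then show ?thesis using R by blast
      next
        case False
        then have "\<bar>snd q - snd x\<bar> \<le> e2" using q2 y2 by (auto simp: \<epsilon>_def)
        moreover have "0 \<le> sh*(fst x - fst q) \<and> sh*(fst x - fst q) \<le> \<bar>fst x - fst g\<bar>"
          using bs1[of "fst g" "fst x" "fst q"] A1 by (simp add: sh_def)
        ultimately show ?thesis using e2(2) by blast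
      qed
    next
      case A1: False
      then have fq: "\<bar>fst q - fst x\<bar> < \<epsilon>" using q1 y1 by auto
      show ?thesis
      proof (cases "min (snd g) (snd x) \<le> snd q \<and> snd q \<le> max (snd g) (snd x)")
        case True
        have "\<bar>fst q - fst x\<bar> \<le> e1" using fq by (simp add: \<epsilon>_def)
        moreover have "0 \<le> sv*(snd x - snd q) \<and> sv*(snd x - snd q) \<le> \<bar>snd x - snd g\<bar>"
          using bs1[of "snd g" "snd x" "snd q"] True by (simp add: sv_def)
        ultimately show ?thesis using e1(2) by blast
      next
        case False
        then have sq: "\<bar>snd q - snd x\<bar> < \<epsilon>" using q2 y2 by auto
        have "dist q x < e3" using dsum[of q x] fq sq by (simp add: \<epsilon>_def)
        then have "q \<in> interior P" using e3 by (auto simp: dist_commute)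
        then show ?thesis using interior_subset by blast
      qed
    qed
  qed
qed



lemma clamp: "min a b \<le> (c::real) \<Longrightarrow> c \<le> max a b \<Longrightarrow>
  \<bar>max (min a b') (min c (max a b')) - c\<bar> \<le> \<bar>b' - b\<bar>"
  by (cases "a \<le> b"; cases "a \<le> b'"; cases "c \<le> b'"; cases "c \<le> a"; simp add: min_def max_def; linarith)

lemma clamp_in: "min a b' \<le> max (min a b') (min (c::real) (max a b')) \<and> max (min a b') (min c (max a b')) \<le> max a b'"
  by (auto simp: min_def max_def)

lemma closedG: assumes "closed P" shows "closed {y. rect g y \<subseteq> P}"
proof -
  have "closure {y. rect g y \<subseteq> P} \<subseteq> {y. rect g y \<subseteq> P}"
  proof
    fix y assume y: "y \<in> closure {y. rect g y \<subseteq> P}"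
    show "y \<in> {y. rect g y \<subseteq> P}"
    proof (intro CollectI subsetI)
      fix q assume q: "q \<in> rect g y"
      have "\<forall>e>0. \<exists>q'\<in>P. dist q' q < e"
      proof (intro allI impI)
        fix e :: real assume e: "e > 0"
        obtain z where z: "rect g z \<subseteq> P" "dist z y < e/2"
          using y e closure_approachable[of y] by (metis (no_types, lifting) half_gt_zero mem_Collect_eq)
        define q' where "q' = (max (min (fst g) (fst z)) (min (fst q) (max (fst g) (fst z))),
                              max (min (snd g) (snd z)) (min (snd q) (max (snd g) (snd z))))"
        have "q' \<in> rect g z" unfolding q'_def rect_def using clamp_in by simp
        then have "q' \<in> P" using z by blast
        have q1: "min (fst g) (fst y) \<le> fst q" "fst q \<le> max (fst g) (fst y)"
         and q2: "min (snd g) (snd y) \<le> snd q" "snd q \<le> max (snd g) (snd y)"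
          using q by (auto simp: rect_def)
        have "\<bar>fst q' - fst q\<bar> \<le> \<bar>fst z - fst y\<bar>" using clamp[OF q1] by (simp add: q'_def)
        moreover have "\<bar>snd q' - snd q\<bar> \<le> \<bar>snd z - snd y\<bar>" using clamp[OF q2] by (simp add: q'_def)
        moreover have "\<bar>fst z - fst y\<bar> \<le> dist z y" "\<bar>snd z - snd y\<bar> \<le> dist z y" using dfst dsnd by auto
        ultimately have "dist q' q < e" using dsum[of q' q] z(2) by linarith
        then show "\<exists>q'\<in>P. dist q' q < e" using \<open>q' \<in> P\<close> by blast
      qed
      then show "q \<in> P" using closed_approachable[OF assms] by blast
    qed
  qed
  then show ?thesis using closure_subset_eq by blast
qed

lemma conn_const:
  assumes op: "orthogonal_polygon P" and C: "connected C" "C \<subseteq> interior P - cuts P"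
  shows "C \<subseteq> {y. rect g y \<subseteq> P} \<or> C \<inter> {y. rect g y \<subseteq> P} = {}"
proof -
  let ?G = "{y. rect g y \<subseteq> P}"
  have cl: "closed ?G" using closedG[OF op_closed[OF op]] .
  have sub: "C \<inter> ?G \<subseteq> interior ?G"
  proof
    fix y assume y: "y \<in> C \<inter> ?G"
    then obtain \<epsilon> where "\<epsilon> > 0" "\<forall>y'. dist y' y < \<epsilon> \<longrightarrow> rect g y' \<subseteq> P"
      using local_open[OF op, of y g] C(2) by blast
    then have "ball y \<epsilon> \<subseteq> ?G"
    proof -
      assume h: "\<forall>y'. dist y' y < \<epsilon> \<longrightarrow> rect g y' \<subseteq> P"
      show ?thesis
      proof
        fix y' assume "y' \<in> ball y \<epsilon>"
        then have "dist y' y < \<epsilon>" by (simp add: dist_commute)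
        then show "y' \<in> ?G" using h by blast
      qed
    qed
    then show "y \<in> interior ?G" using \<open>\<epsilon> > 0\<close> interior_maximal[OF _ open_ball] centre_in_ball by blast
  qed
  have d: "interior ?G \<inter> - ?G \<inter> C = {}" using interior_subset[of ?G] by blast
  have cov: "C \<subseteq> interior ?G \<union> - ?G" using sub by blast
  have "interior ?G \<inter> C = {} \<or> (- ?G) \<inter> C = {}"
    using connectedD[OF C(1) open_interior open_Compl[OF cl] d cov] .
  then show ?thesis using sub by blast
qed

lemma pixel_facts:
  assumes op: "orthogonal_polygon P" and psi: "\<psi> \<in> pixels P"
  obtains C where "connected C" "C \<subseteq> interior P - cuts P" "\<psi> = closure C" "\<psi> \<subseteq> P"
proof -
  obtain C where C: "C \<in> components (interior P - cuts P)" "\<psi> = closure C"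
    using psi unfolding pixels_def by blast
  have "C \<subseteq> P" using in_components_subset[OF C(1)] interior_subset by blast
  then have "\<psi> \<subseteq> P" using C(2) closure_minimal op_closed[OF op] by blast
  then show ?thesis using that in_components_connected[OF C(1)] in_components_subset[OF C(1)] C(2) by blast
qed

lemma main0:
  assumes op: "orthogonal_polygon P" and psi: "\<psi> \<in> pixels P" and p: "p \<in> interior \<psi>"
    and pc: "p \<notin> cuts P" and R: "rect g p \<subseteq> P"
  shows "\<forall>p'\<in>\<psi>. rect g p' \<subseteq> P"
proof -
  obtain C where C: "connected C" "C \<subseteq> interior P - cuts P" "\<psi> = closure C" "\<psi> \<subseteq> P"
    using pixel_facts[OF op psi] by blast
  have pi: "p \<in> interior P" using p C(4) interior_mono by blast
  obtain \<epsilon> where e: "\<epsilon> > 0" "\<forall>y. dist y p < \<epsilon> \<longrightarrow> rect g y \<subseteq> P"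
    using local_open[OF op pi pc R] by blast
  have "p \<in> closure C" using p C(3) interior_subset by blast
  then obtain c where "c \<in> C" "dist c p < \<epsilon>" using closure_approachable e(1) by blast
  then have "C \<inter> {y. rect g y \<subseteq> P} \<noteq> {}" using e by blast
  then have "C \<subseteq> {y. rect g y \<subseteq> P}" using conn_const[OF op C(1,2)] by blast
  then have "closure C \<subseteq> {y. rect g y \<subseteq> P}"
    using closure_minimal closedG[OF op_closed[OF op]] by blast
  then show ?thesis using C(3) by blast
qed



lemma hb: "min a b \<le> c \<Longrightarrow> c \<le> max a b \<Longrightarrow> s = 1 \<or> s = -1 \<Longrightarrow>
    min 0 (s*(b-a)) \<le> s*(c-a) \<and> s*(c-a) \<le> max 0 (s*(b-a::real))"
  by (auto simp: min_def max_def split: if_splits)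

lemma hb': "s = 1 \<or> s = -1 \<Longrightarrow> min 0 (s*(b-a)) \<le> s*(c-a) \<Longrightarrow> s*(c-a) \<le> max 0 (s*(b-a::real)) \<Longrightarrow>
    min a b \<le> c \<and> c \<le> max a b"
  by (auto simp: min_def max_def split: if_splits)

lemma chord_v:
  assumes op: "orthogonal_polygon P"
    and e: "e > 0" and sx: "sx = 1 \<or> sx = -1" and sy: "sy = 1 \<or> sy = -1"
    and M: "\<forall>q. dist q v < e \<longrightarrow> (q \<in> P \<longleftrightarrow> \<not> (0 < sx*(fst q - fst v) \<and> 0 < sy*(snd q - snd v)))"
    and t: "t > 0" and pdef: "p = (fst v, snd v - sy*t)"
    and chord: "\<forall>\<sigma>. 0 < \<sigma> \<and> \<sigma> < t \<longrightarrow> (fst v, snd v - sy*\<sigma>) \<in> interior P"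
    and pi: "p \<in> interior P" and r: "r > 0" and B: "ball p r \<subseteq> closure C"
    and C: "connected C" "C \<subseteq> interior P - cuts P"
  shows False
proof -
  have sxx: "sx * sx = 1" using sx by auto
  have syy: "sy * sy = 1" using sy by auto
  define \<eta> where "\<eta> = e/2"
  have eta: "\<eta> > 0" "\<eta> < e" using e by (auto simp: \<eta>_def)
  define g' where "g' = (fst v, snd v + sy*\<eta>)"
  define f where "f = (\<lambda>\<tau>. (fst v, snd v - sy*\<tau>))"
  have K: "compact (f ` {-\<eta>..t})"
    unfolding f_def by (rule compact_continuous_image[OF _ compact_Icc]) (intro continuous_intros)
  have Ksub: "f ` {-\<eta>..t} \<subseteq> \<Union>{interior P, ball v e}"
  proof
    fix z assume "z \<in> f ` {-\<eta>..t}"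
    then obtain \<tau> where \<tau>: "-\<eta> \<le> \<tau>" "\<tau> \<le> t" "z = f \<tau>" by auto
    show "z \<in> \<Union>{interior P, ball v e}"
    proof (cases "\<tau> \<le> 0")
      case True
      have "dist v z \<le> \<bar>sy*\<tau>\<bar>" using dsum[of v z] by (simp add: \<tau>(3) f_def)
      also have "\<dots> = \<bar>\<tau>\<bar>" using sy by auto
      finally have "dist v z < e" using True \<tau>(1) eta by linarith
      then show ?thesis by simp
    next
      case False
      show ?thesis
      proof (cases "\<tau> = t")
        case True then show ?thesis using pi \<tau>(3) pdef by (simp add: f_def)
      next
        case False
        then show ?thesis using chord \<tau> \<open>\<not> \<tau> \<le> 0\<close> by (simp add: f_def)
      qed
    qed
  qed
  obtain e' where e': "e' > 0" "\<And>z. z \<in> f ` {-\<eta>..t} \<Longrightarrow> \<exists>G\<in>{interior P, ball v e}. ball z e' \<subseteq> G"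
    using Heine_Borel_lemma[OF K Ksub] by blast
  have strip: "q \<in> P" if q1: "0 \<le> -sx*(fst q - fst v)" "-sx*(fst q - fst v) < e'"
    and q2: "-\<eta> \<le> sy*(snd v - snd q)" "sy*(snd v - snd q) \<le> t" for q
  proof -
    define \<tau> where "\<tau> = sy*(snd v - snd q)"
    have fz: "f \<tau> = (fst v, snd q)" using syy by (simp add: f_def \<tau>_def algebra_simps mult.assoc[symmetric])
    have "f \<tau> \<in> f ` {-\<eta>..t}" using q2 by (simp add: \<tau>_def)
    then obtain G where G: "G \<in> {interior P, ball v e}" "ball (fst v, snd q) e' \<subseteq> G"
      using e'(2) fz by metis
    have "\<bar>fst q - fst v\<bar> = \<bar>-sx*(fst q - fst v)\<bar>" using sx by auto
    then have "\<bar>fst q - fst v\<bar> < e'" using q1 by simp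
    moreover have "dist q (fst v, snd q) \<le> \<bar>fst q - fst v\<bar>" using dsum[of q "(fst v, snd q)"] by simp
    ultimately have "q \<in> ball (fst v, snd q) e'" by (simp add: dist_commute)
    then have qG: "q \<in> G" using G by blast
    show "q \<in> P"
    proof (cases "G = interior P")
      case True then show ?thesis using qG interior_subset by blast
    next
      case False
      then have "dist q v < e" using G qG by (auto simp: dist_commute)
      moreover have "\<not> 0 < sx*(fst q - fst v)" using q1 by simp
      ultimately show ?thesis using M by blast
    qed
  qed
  obtain r0 where r0: "r0 > 0" "ball p r0 \<subseteq> interior P"
    using pi open_contains_ball_eq[OF open_interior] by blast
  define \<rho> where "\<rho> = min (min r r0) (min (e'/3) (min t e)) / 2"
  have \<rho>: "\<rho> > 0" "\<rho> < r" "2*\<rho> \<le> r0" "3*\<rho> \<le> e'/2" "\<rho> \<le> t/2" "\<rho> \<le> e/2"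
    using r r0 e' t e by (auto simp: \<rho>_def)
  let ?G = "{y. rect g' y \<subseteq> P}"
  have near: "\<exists>c\<in>C. dist c a < \<rho>/2" if "dist a p < r" for a
  proof -
    have "a \<in> closure C" using B that by (auto simp: dist_commute)
    then show ?thesis using closure_approachable \<rho>(1) by (metis half_gt_zero)
  qed
  define aL where "aL = (fst v - sx*\<rho>, snd p)"
  define aR where "aR = (fst v + sx*\<rho>, snd p)"
  have "dist aL p \<le> \<rho>" using dsum[of aL p] sx \<rho>(1) pdef by (auto simp: aL_def)
  then have "dist aL p < r" using \<rho> by linarith
  then obtain cL where cL: "cL \<in> C" "dist cL aL < \<rho>/2" using near by blast
  have "dist aR p \<le> \<rho>" using dsum[of aR p] sx \<rho>(1) pdef by (auto simp: aR_def)
  then have "dist aR p < r" using \<rho> by linarith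
  then obtain cR where cR: "cR \<in> C" "dist cR aR < \<rho>/2" using near by blast
  have cL1: "\<bar>fst cL - fst aL\<bar> < \<rho>/2" and cL2: "\<bar>snd cL - snd p\<bar> < \<rho>/2"
    using dfst[of cL aL] dsnd[of cL aL] cL(2) by (auto simp: aL_def)
  have cR1: "\<bar>fst cR - fst aR\<bar> < \<rho>/2" and cR2: "\<bar>snd cR - snd p\<bar> < \<rho>/2"
    using dfst[of cR aR] dsnd[of cR aR] cR(2) by (auto simp: aR_def)
  have absx: "\<And>z. \<bar>sx*z\<bar> = \<bar>z\<bar>" "\<And>z. \<bar>sy*z\<bar> = \<bar>z\<bar>" using sx sy by auto
  have Lx: "-sx*(fst cL - fst v) > \<rho>/2 \<and> -sx*(fst cL - fst v) < 3*\<rho>/2"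
  proof -
    have "-sx*(fst cL - fst v) = \<rho> - sx*(fst cL - fst aL)" using sxx by (simp add: aL_def algebra_simps)
    moreover have "\<bar>sx*(fst cL - fst aL)\<bar> < \<rho>/2" using cL1 absx by simp
    ultimately show ?thesis by linarith
  qed
  have Rx: "sx*(fst cR - fst v) > \<rho>/2" 
  proof -
    have "sx*(fst cR - fst v) = \<rho> + sx*(fst cR - fst aR)" using sxx by (simp add: aR_def algebra_simps)
    moreover have "\<bar>sx*(fst cR - fst aR)\<bar> < \<rho>/2" using cR1 absx by simp
    ultimately show ?thesis by linarith
  qed
  have pv: "sy*(snd v - snd p) = t" using syy pdef by (simp add: algebra_simps mult.assoc[symmetric])
  have gL: "cL \<in> ?G"
  proof (intro CollectI subsetI)
    fix q assume q: "q \<in> rect g' cL"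
    have qa: "min (fst g') (fst cL) \<le> fst q" "fst q \<le> max (fst g') (fst cL)"
      and qb: "min (snd g') (snd cL) \<le> snd q" "snd q \<le> max (snd g') (snd cL)"
      using q by (auto simp: rect_def)
    have h1: "min 0 (-sx*(fst cL - fst v)) \<le> -sx*(fst q - fst v) \<and> -sx*(fst q - fst v) \<le> max 0 (-sx*(fst cL - fst v))"
      using hb[OF qa, of "-sx"] sx by (simp add: g'_def) blast
    then have q1: "0 \<le> -sx*(fst q - fst v)" "-sx*(fst q - fst v) \<le> 3*\<rho>/2" using Lx by auto
    have h2: "min 0 (sy*(snd cL - snd g')) \<le> sy*(snd q - snd g') \<and> sy*(snd q - snd g') \<le> max 0 (sy*(snd cL - snd g'))"
      using hb[OF qb sy] .
    have e1: "sy*(snd q - snd g') = -\<eta> - sy*(snd v - snd q)" using syy by (simp add: g'_def algebra_simps)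
    have e2: "sy*(snd cL - snd g') = -\<eta> - sy*(snd v - snd p) + sy*(snd cL - snd p)"
      using syy by (simp add: g'_def algebra_simps)
    have "\<bar>sy*(snd cL - snd p)\<bar> < \<rho>/2" using cL2 absx by simp
    then have qy: "-\<eta> \<le> sy*(snd v - snd q)" "sy*(snd v - snd q) < t + \<rho>/2"
      using h2 e1 e2 pv \<rho> eta by (auto simp: min_def max_def split: if_splits)
    show "q \<in> P"
    proof (cases "sy*(snd v - snd q) \<le> t")
      case True
      moreover have "-sx*(fst q - fst v) < e'" using q1 \<rho> by linarith
      ultimately show ?thesis using strip[of q] q1 qy by blast
    next
      case False
      have "sy*(snd v - snd q) - sy*(snd v - snd p) = sy*(snd p - snd q)" by (simp add: algebra_simps)
      then have "\<bar>snd q - snd p\<bar> = \<bar>sy*(snd v - snd q) - sy*(snd v - snd p)\<bar>"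
        using absx(2)[of "snd p - snd q"] by (simp add: abs_minus_commute)
      then have d2: "\<bar>snd q - snd p\<bar> < \<rho>/2" using False qy pv by auto
      have "\<bar>fst q - fst p\<bar> = \<bar>-sx*(fst q - fst v)\<bar>" using absx pdef by simp
      then have d1: "\<bar>fst q - fst p\<bar> \<le> 3*\<rho>/2" using q1 by simp
      have "dist q p < r0" using dsum[of q p] d1 d2 \<rho> by linarith
      then have "q \<in> interior P" using r0 by (auto simp: dist_commute)
      then show ?thesis using interior_subset by blast
    qed
  qed
  have gR: "cR \<notin> ?G"
  proof
    assume "cR \<in> ?G"
    then have sub: "rect g' cR \<subseteq> P" by simp
    define q where "q = (fst v + sx*(\<rho>/4), snd v + sy*(\<eta>/2))"
    have "min (fst g') (fst cR) \<le> fst q \<and> fst q \<le> max (fst g') (fst cR)"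
    proof (rule hb'[of sx])
      show "sx = 1 \<or> sx = -1" by (rule sx)
      have "sx*(fst q - fst g') = \<rho>/4" using sxx by (simp add: q_def g'_def algebra_simps)
      then show "min 0 (sx*(fst cR - fst g')) \<le> sx*(fst q - fst g')" "sx*(fst q - fst g') \<le> max 0 (sx*(fst cR - fst g'))"
        using Rx \<rho> by (auto simp: g'_def)
    qed
    moreover have "min (snd g') (snd cR) \<le> snd q \<and> snd q \<le> max (snd g') (snd cR)"
    proof (rule hb'[of sy])
      show "sy = 1 \<or> sy = -1" by (rule sy)
      have "sy*(snd q - snd g') = -\<eta>/2" using syy by (simp add: q_def g'_def algebra_simps)
      moreover have "sy*(snd cR - snd g') = -\<eta> - sy*(snd v - snd p) + sy*(snd cR - snd p)"
        using syy by (simp add: g'_def algebra_simps)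
      moreover have "\<bar>sy*(snd cR - snd p)\<bar> < \<rho>/2" using cR2 absx by simp
      ultimately show "min 0 (sy*(snd cR - snd g')) \<le> sy*(snd q - snd g')" "sy*(snd q - snd g') \<le> max 0 (sy*(snd cR - snd g'))"
        using pv \<rho> eta by (auto simp: min_def max_def)
    qed
    ultimately have "q \<in> rect g' cR" by (simp add: rect_def)
    then have "q \<in> P" using sub by blast
    moreover have "dist q v < e"
    proof -
      have "dist q v \<le> \<bar>sx*(\<rho>/4)\<bar> + \<bar>sy*(\<eta>/2)\<bar>" using dsum[of q v] by (simp add: q_def)
      then show ?thesis using absx \<rho> eta by (simp add: \<eta>_def)
    qed
    moreover have "0 < sx*(fst q - fst v)" "0 < sy*(snd q - snd v)"
      using sxx syy \<rho> eta by (simp_all add: q_def mult.assoc[symmetric])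
    ultimately show False using M by blast
  qed
  have "C \<subseteq> ?G \<or> C \<inter> ?G = {}" using conn_const[OF op C] .
  then show False using gL gR cL(1) cR(1) by blast
qed



lemma chord_h:
  assumes op: "orthogonal_polygon P"
    and e: "e > 0" and sx: "sx = 1 \<or> sx = -1" and sy: "sy = 1 \<or> sy = -1"
    and M: "\<forall>q. dist q v < e \<longrightarrow> (q \<in> P \<longleftrightarrow> \<not> (0 < sx*(snd q - snd v) \<and> 0 < sy*(fst q - fst v)))"
    and t: "t > 0" and pdef: "p = (fst v - sy*t, snd v)"
    and chord: "\<forall>\<sigma>. 0 < \<sigma> \<and> \<sigma> < t \<longrightarrow> (fst v - sy*\<sigma>, snd v) \<in> interior P"
    and pi: "p \<in> interior P" and r: "r > 0" and B: "ball p r \<subseteq> closure C"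
    and C: "connected C" "C \<subseteq> interior P - cuts P"
  shows False
proof -
  have sxx: "sx * sx = 1" using sx by auto
  have syy: "sy * sy = 1" using sy by auto
  define \<eta> where "\<eta> = e/2"
  have eta: "\<eta> > 0" "\<eta> < e" using e by (auto simp: \<eta>_def)
  define g' where "g' = (fst v + sy*\<eta>, snd v)"
  define f where "f = (\<lambda>\<tau>. (fst v - sy*\<tau>, snd v))"
  have K: "compact (f ` {-\<eta>..t})"
    unfolding f_def by (rule compact_continuous_image[OF _ compact_Icc]) (intro continuous_intros)
  have Ksub: "f ` {-\<eta>..t} \<subseteq> \<Union>{interior P, ball v e}"
  proof
    fix z assume "z \<in> f ` {-\<eta>..t}"
    then obtain \<tau> where \<tau>: "-\<eta> \<le> \<tau>" "\<tau> \<le> t" "z = f \<tau>" by auto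
    show "z \<in> \<Union>{interior P, ball v e}"
    proof (cases "\<tau> \<le> 0")
      case True
      have "dist v z \<le> \<bar>sy*\<tau>\<bar>" using dsum[of v z] by (simp add: \<tau>(3) f_def)
      also have "\<dots> = \<bar>\<tau>\<bar>" using sy by auto
      finally have "dist v z < e" using True \<tau>(1) eta by linarith
      then show ?thesis by simp
    next
      case False
      show ?thesis
      proof (cases "\<tau> = t")
        case True then show ?thesis using pi \<tau>(3) pdef by (simp add: f_def)
      next
        case False
        then show ?thesis using chord \<tau> \<open>\<not> \<tau> \<le> 0\<close> by (simp add: f_def)
      qed
    qed
  qed
  obtain e' where e': "e' > 0" "\<And>z. z \<in> f ` {-\<eta>..t} \<Longrightarrow> \<exists>G\<in>{interior P, ball v e}. ball z e' \<subseteq> G"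
    using Heine_Borel_lemma[OF K Ksub] by blast
  have strip: "q \<in> P" if q1: "0 \<le> -sx*(snd q - snd v)" "-sx*(snd q - snd v) < e'"
    and q2: "-\<eta> \<le> sy*(fst v - fst q)" "sy*(fst v - fst q) \<le> t" for q
  proof -
    define \<tau> where "\<tau> = sy*(fst v - fst q)"
    have fz: "f \<tau> = (fst q, snd v)" using syy by (simp add: f_def \<tau>_def algebra_simps mult.assoc[symmetric])
    have "f \<tau> \<in> f ` {-\<eta>..t}" using q2 by (simp add: \<tau>_def)
    then obtain G where G: "G \<in> {interior P, ball v e}" "ball (fst q, snd v) e' \<subseteq> G"
      using e'(2) fz by metis
    have "\<bar>snd q - snd v\<bar> = \<bar>-sx*(snd q - snd v)\<bar>" using sx by auto
    then have "\<bar>snd q - snd v\<bar> < e'" using q1 by simp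
    moreover have "dist q (fst q, snd v) \<le> \<bar>snd q - snd v\<bar>" using dsum[of q "(fst q, snd v)"] by simp
    ultimately have "q \<in> ball (fst q, snd v) e'" by (simp add: dist_commute)
    then have qG: "q \<in> G" using G by blast
    show "q \<in> P"
    proof (cases "G = interior P")
      case True then show ?thesis using qG interior_subset by blast
    next
      case False
      then have "dist q v < e" using G qG by (auto simp: dist_commute)
      moreover have "\<not> 0 < sx*(snd q - snd v)" using q1 by simp
      ultimately show ?thesis using M by blast
    qed
  qed
  obtain r0 where r0: "r0 > 0" "ball p r0 \<subseteq> interior P"
    using pi open_contains_ball_eq[OF open_interior] by blast
  define \<rho> where "\<rho> = min (min r r0) (min (e'/3) (min t e)) / 2"
  have \<rho>: "\<rho> > 0" "\<rho> < r" "2*\<rho> \<le> r0" "3*\<rho> \<le> e'/2" "\<rho> \<le> t/2" "\<rho> \<le> e/2"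
    using r r0 e' t e by (auto simp: \<rho>_def)
  let ?G = "{y. rect g' y \<subseteq> P}"
  have near: "\<exists>c\<in>C. dist c a < \<rho>/2" if "dist a p < r" for a
  proof -
    have "a \<in> closure C" using B that by (auto simp: dist_commute)
    then show ?thesis using closure_approachable \<rho>(1) by (metis half_gt_zero)
  qed
  define aL where "aL = (fst p, snd v - sx*\<rho>)"
  define aR where "aR = (fst p, snd v + sx*\<rho>)"
  have "dist aL p \<le> \<rho>" using dsum[of aL p] sx \<rho>(1) pdef by (auto simp: aL_def)
  then have "dist aL p < r" using \<rho> by linarith
  then obtain cL where cL: "cL \<in> C" "dist cL aL < \<rho>/2" using near by blast
  have "dist aR p \<le> \<rho>" using dsum[of aR p] sx \<rho>(1) pdef by (auto simp: aR_def)
  then have "dist aR p < r" using \<rho> by linarith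
  then obtain cR where cR: "cR \<in> C" "dist cR aR < \<rho>/2" using near by blast
  have cL1: "\<bar>snd cL - snd aL\<bar> < \<rho>/2" and cL2: "\<bar>fst cL - fst p\<bar> < \<rho>/2"
    using dfst[of cL aL] dsnd[of cL aL] cL(2) by (auto simp: aL_def)
  have cR1: "\<bar>snd cR - snd aR\<bar> < \<rho>/2" and cR2: "\<bar>fst cR - fst p\<bar> < \<rho>/2"
    using dfst[of cR aR] dsnd[of cR aR] cR(2) by (auto simp: aR_def)
  have absx: "\<And>z. \<bar>sx*z\<bar> = \<bar>z\<bar>" "\<And>z. \<bar>sy*z\<bar> = \<bar>z\<bar>" using sx sy by auto
  have Lx: "-sx*(snd cL - snd v) > \<rho>/2 \<and> -sx*(snd cL - snd v) < 3*\<rho>/2"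
  proof -
    have "-sx*(snd cL - snd v) = \<rho> - sx*(snd cL - snd aL)" using sxx by (simp add: aL_def algebra_simps)
    moreover have "\<bar>sx*(snd cL - snd aL)\<bar> < \<rho>/2" using cL1 absx by simp
    ultimately show ?thesis by linarith
  qed
  have Rx: "sx*(snd cR - snd v) > \<rho>/2" 
  proof -
    have "sx*(snd cR - snd v) = \<rho> + sx*(snd cR - snd aR)" using sxx by (simp add: aR_def algebra_simps)
    moreover have "\<bar>sx*(snd cR - snd aR)\<bar> < \<rho>/2" using cR1 absx by simp
    ultimately show ?thesis by linarith
  qed
  have pv: "sy*(fst v - fst p) = t" using syy pdef by (simp add: algebra_simps mult.assoc[symmetric])
  have gL: "cL \<in> ?G"
  proof (intro CollectI subsetI)
    fix q assume q: "q \<in> rect g' cL"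
    have qa: "min (snd g') (snd cL) \<le> snd q" "snd q \<le> max (snd g') (snd cL)"
      and qb: "min (fst g') (fst cL) \<le> fst q" "fst q \<le> max (fst g') (fst cL)"
      using q by (auto simp: rect_def)
    have h1: "min 0 (-sx*(snd cL - snd v)) \<le> -sx*(snd q - snd v) \<and> -sx*(snd q - snd v) \<le> max 0 (-sx*(snd cL - snd v))"
      using hb[OF qa, of "-sx"] sx by (simp add: g'_def) blast
    then have q1: "0 \<le> -sx*(snd q - snd v)" "-sx*(snd q - snd v) \<le> 3*\<rho>/2" using Lx by auto
    have h2: "min 0 (sy*(fst cL - fst g')) \<le> sy*(fst q - fst g') \<and> sy*(fst q - fst g') \<le> max 0 (sy*(fst cL - fst g'))"
      using hb[OF qb sy] .
    have e1: "sy*(fst q - fst g') = -\<eta> - sy*(fst v - fst q)" using syy by (simp add: g'_def algebra_simps)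
    have e2: "sy*(fst cL - fst g') = -\<eta> - sy*(fst v - fst p) + sy*(fst cL - fst p)"
      using syy by (simp add: g'_def algebra_simps)
    have "\<bar>sy*(fst cL - fst p)\<bar> < \<rho>/2" using cL2 absx by simp
    then have qy: "-\<eta> \<le> sy*(fst v - fst q)" "sy*(fst v - fst q) < t + \<rho>/2"
      using h2 e1 e2 pv \<rho> eta by (auto simp: min_def max_def split: if_splits)
    show "q \<in> P"
    proof (cases "sy*(fst v - fst q) \<le> t")
      case True
      moreover have "-sx*(snd q - snd v) < e'" using q1 \<rho> by linarith
      ultimately show ?thesis using strip[of q] q1 qy by blast
    next
      case False
      have "sy*(fst v - fst q) - sy*(fst v - fst p) = sy*(fst p - fst q)" by (simp add: algebra_simps)
      then have "\<bar>fst q - fst p\<bar> = \<bar>sy*(fst v - fst q) - sy*(fst v - fst p)\<bar>"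
        using absx(2)[of "fst p - fst q"] by (simp add: abs_minus_commute)
      then have d2: "\<bar>fst q - fst p\<bar> < \<rho>/2" using False qy pv by auto
      have "\<bar>snd q - snd p\<bar> = \<bar>-sx*(snd q - snd v)\<bar>" using absx pdef by simp
      then have d1: "\<bar>snd q - snd p\<bar> \<le> 3*\<rho>/2" using q1 by simp
      have "dist q p < r0" using dsum[of q p] d1 d2 \<rho> by linarith
      then have "q \<in> interior P" using r0 by (auto simp: dist_commute)
      then show ?thesis using interior_subset by blast
    qed
  qed
  have gR: "cR \<notin> ?G"
  proof
    assume "cR \<in> ?G"
    then have sub: "rect g' cR \<subseteq> P" by simp
    define q where "q = (fst v + sy*(\<eta>/2), snd v + sx*(\<rho>/4))"
    have "min (snd g') (snd cR) \<le> snd q \<and> snd q \<le> max (snd g') (snd cR)"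
    proof (rule hb'[of sx])
      show "sx = 1 \<or> sx = -1" by (rule sx)
      have "sx*(snd q - snd g') = \<rho>/4" using sxx by (simp add: q_def g'_def algebra_simps)
      then show "min 0 (sx*(snd cR - snd g')) \<le> sx*(snd q - snd g')" "sx*(snd q - snd g') \<le> max 0 (sx*(snd cR - snd g'))"
        using Rx \<rho> by (auto simp: g'_def)
    qed
    moreover have "min (fst g') (fst cR) \<le> fst q \<and> fst q \<le> max (fst g') (fst cR)"
    proof (rule hb'[of sy])
      show "sy = 1 \<or> sy = -1" by (rule sy)
      have "sy*(fst q - fst g') = -\<eta>/2" using syy by (simp add: q_def g'_def algebra_simps)
      moreover have "sy*(fst cR - fst g') = -\<eta> - sy*(fst v - fst p) + sy*(fst cR - fst p)"
        using syy by (simp add: g'_def algebra_simps)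
      moreover have "\<bar>sy*(fst cR - fst p)\<bar> < \<rho>/2" using cR2 absx by simp
      ultimately show "min 0 (sy*(fst cR - fst g')) \<le> sy*(fst q - fst g')" "sy*(fst q - fst g') \<le> max 0 (sy*(fst cR - fst g'))"
        using pv \<rho> eta by (auto simp: min_def max_def)
    qed
    ultimately have "q \<in> rect g' cR" by (simp add: rect_def)
    then have "q \<in> P" using sub by blast
    moreover have "dist q v < e"
    proof -
      have "dist q v \<le> \<bar>sx*(\<rho>/4)\<bar> + \<bar>sy*(\<eta>/2)\<bar>" using dsum[of q v] by (simp add: q_def)
      then show ?thesis using absx \<rho> eta by (simp add: \<eta>_def)
    qed
    moreover have "0 < sx*(snd q - snd v)" "0 < sy*(fst q - fst v)"
      using sxx syy \<rho> eta by (simp_all add: q_def mult.assoc[symmetric])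
    ultimately show False using M by blast
  qed
  have "C \<subseteq> ?G \<or> C \<inter> ?G = {}" using conn_const[OF op C] .
  then show False using gL gR cL(1) cR(1) by blast
qed




lemma reflex_unfold:
  assumes "reflex_vertex P v"
  obtains e sx sy where "v \<in> P" "e > 0" "sx = 1 \<or> sx = -1" "sy = 1 \<or> sy = -1"
    "\<forall>q. dist q v < e \<longrightarrow> (q \<in> P \<longleftrightarrow> \<not> (0 < sx*(fst q - fst v) \<and> 0 < sy*(snd q - snd v)))"
  using assms unfolding reflex_vertex_def by auto

lemma missing_near:
  fixes v w :: pt
  assumes e: "e > 0" and sx: "sx = 1 \<or> sx = -1" and sy: "sy = 1 \<or> sy = -1"
    and M: "\<forall>q. dist q v < e \<longrightarrow> (q \<in> P \<longleftrightarrow> \<not> (0 < sx*(fst q - fst v) \<and> 0 < sy*(snd q - snd v)))"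
    and w: "w \<in> interior P" "dist w v < e/2"
    and w1: "0 \<le> sx*(fst w - fst v)" and w2: "0 \<le> sy*(snd w - snd v)"
  shows False
proof -
  obtain \<epsilon> where ep: "\<epsilon> > 0" "ball w \<epsilon> \<subseteq> interior P"
    using w(1) open_contains_ball_eq[OF open_interior] by blast
  define h where "h = min \<epsilon> (e/4) / 4"
  have h: "h > 0" "2*h < \<epsilon>" "h \<le> e/16" using ep e by (auto simp: h_def)
  define q where "q = (fst w + sx*h, snd w + sy*h)"
  have absx: "\<And>z. \<bar>sx*z\<bar> = \<bar>z\<bar>" "\<And>z. \<bar>sy*z\<bar> = \<bar>z\<bar>" using sx sy by auto
  have "dist q w \<le> \<bar>sx*h\<bar> + \<bar>sy*h\<bar>" using dsum[of q w] by (simp add: q_def)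
  then have dqw: "dist q w \<le> 2*h" using absx h by simp
  then have "dist w q < \<epsilon>" using h by (simp add: dist_commute)
  then have "q \<in> interior P" using ep by auto
  then have qP: "q \<in> P" using interior_subset by blast
  have "dist q v \<le> dist q w + dist w v" by (rule dist_triangle)
  then have "dist q v < e" using dqw h w(2) by linarith
  moreover have "0 < sx*(fst q - fst v)"
  proof -
    have "sx*(fst q - fst v) = sx*(fst w - fst v) + (sx * sx)*h" by (simp add: q_def algebra_simps)
    then show ?thesis using w1 sx h by auto
  qed
  moreover have "0 < sy*(snd q - snd v)"
  proof -
    have "sy*(snd q - snd v) = sy*(snd w - snd v) + (sy * sy)*h" by (simp add: q_def algebra_simps)
    then show ?thesis using w2 sy h by auto
  qed
  ultimately show False using M qP by blast
qed

lemma not_cut: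
  assumes op: "orthogonal_polygon P" and psi: "\<psi> \<in> pixels P" and p: "p \<in> interior \<psi>"
  shows "p \<notin> cuts P"
proof
  assume "p \<in> cuts P"
  then obtain v d where rv: "reflex_vertex P v" and dax: "d \<in> axis_dirs" and pr: "p \<in> ray P v d"
    unfolding cuts_def by blast
  obtain C where C: "connected C" "C \<subseteq> interior P - cuts P" "\<psi> = closure C" "\<psi> \<subseteq> P"
    using pixel_facts[OF op psi] by blast
  have pi: "p \<in> interior P" using p C(4) interior_mono by blast
  obtain r where r: "r > 0" "ball p r \<subseteq> interior \<psi>"
    using p open_contains_ball_eq[OF open_interior] by blast
  have B: "ball p r \<subseteq> closure C" using r C(3) interior_subset by blast
  obtain e sx sy where vP: "v \<in> P" and e: "e > 0" and sx: "sx = 1 \<or> sx = -1" and sy: "sy = 1 \<or> sy = -1"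
    and M: "\<forall>q. dist q v < e \<longrightarrow> (q \<in> P \<longleftrightarrow> \<not> (0 < sx*(fst q - fst v) \<and> 0 < sy*(snd q - snd v)))"
    by (rule reflex_unfold[OF rv])
  obtain t where pt: "p = v + t *\<^sub>R d" and t0: "t \<ge> 0"
    and chord: "\<forall>\<sigma>. 0 < \<sigma> \<and> \<sigma> < t \<longrightarrow> v + \<sigma> *\<^sub>R d \<in> interior P"
    using pr unfolding ray_def by blast
  have vni: "v \<notin> interior P"
  proof
    assume "v \<in> interior P"
    then show False using missing_near[OF e sx sy M, of v] e by simp
  qed
  have tpos: "t > 0"
  proof (rule ccontr)
    assume "\<not> t > 0"
    then have "p = v" using t0 pt by simp
    then show False using pi vni by simp
  qed
  have triv: False if "0 \<le> sx*(fst d)" "0 \<le> sy*(snd d)" "norm d = 1"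
  proof -
    define \<sigma> where "\<sigma> = min t (e/2) / 2"
    have \<sigma>: "0 < \<sigma>" "\<sigma> < t" "\<sigma> < e/2" using tpos e by (auto simp: \<sigma>_def)
    have iP: "v + \<sigma> *\<^sub>R d \<in> interior P" using chord \<sigma> by blast
    have dP: "dist (v + \<sigma> *\<^sub>R d) v < e/2" using \<sigma> that(3) by (simp add: dist_norm)
    have q1: "sx*(fst (v + \<sigma> *\<^sub>R d) - fst v) = \<sigma>*(sx*fst d)" by (simp add: algebra_simps)
    have q2: "sy*(snd (v + \<sigma> *\<^sub>R d) - snd v) = \<sigma>*(sy * snd d)" by (simp add: algebra_simps)
    have n1: "0 \<le> \<sigma>*(sx*fst d)" and n2: "0 \<le> \<sigma>*(sy * snd d)" using that(1,2) \<sigma>(1) by simp_all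
    have w1: "0 \<le> sx*(fst (v + \<sigma> *\<^sub>R d) - fst v)" unfolding q1 by (rule n1)
    have w2: "0 \<le> sy*(snd (v + \<sigma> *\<^sub>R d) - snd v)" unfolding q2 by (rule n2)
    show False by (rule missing_near[OF e sx sy M iP dP w1 w2])
  qed
  have Mc: "\<forall>q. dist q v < e \<longrightarrow> (q \<in> P \<longleftrightarrow> \<not> (0 < sy*(snd q - snd v) \<and> 0 < sx*(fst q - fst v)))"
    using M by blast
  have "d = (1,0) \<or> d = (-1,0) \<or> d = (0,1) \<or> d = (0,-1)" using dax by (simp add: axis_dirs_def)
  then have "(\<exists>a. (a = 1 \<or> a = -1) \<and> d = (a, 0)) \<or> (\<exists>a. (a = 1 \<or> a = -1) \<and> d = (0, a))" by auto
  then show False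
  proof
    assume "\<exists>a. (a = 1 \<or> a = -1) \<and> d = (a, 0)"
    then obtain a where a: "a = 1 \<or> a = -1" "d = (a, 0)" by blast
    show False
    proof (cases "a = sx")
      case True
      then show False using triv a sx by (auto simp: norm_Pair)
    next
      case False
      then have ad: "a = -sx" using a sx by auto
      have pd: "p = (fst v - sx*t, snd v)" using pt a ad by (simp add: prod_eq_iff)
      have ch: "\<forall>\<sigma>. 0 < \<sigma> \<and> \<sigma> < t \<longrightarrow> (fst v - sx*\<sigma>, snd v) \<in> interior P"
      proof (intro allI impI)
        fix \<sigma> :: real assume "0 < \<sigma> \<and> \<sigma> < t"
        then have "v + \<sigma> *\<^sub>R d \<in> interior P" using chord by blast
        moreover have "v + \<sigma> *\<^sub>R d = (fst v - sx*\<sigma>, snd v)" using a ad by (simp add: prod_eq_iff)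
        ultimately show "(fst v - sx*\<sigma>, snd v) \<in> interior P" by simp
      qed
      show False using chord_h[OF op e sy sx Mc tpos pd ch pi r(1) B C(1,2)] .
    qed
  next
    assume "\<exists>a. (a = 1 \<or> a = -1) \<and> d = (0, a)"
    then obtain a where a: "a = 1 \<or> a = -1" "d = (0, a)" by blast
    show False
    proof (cases "a = sy")
      case True
      then show False using triv a sy by (auto simp: norm_Pair)
    next
      case False
      then have ad: "a = -sy" using a sy by auto
      have pd: "p = (fst v, snd v - sy*t)" using pt a ad by (simp add: prod_eq_iff)
      have ch: "\<forall>\<sigma>. 0 < \<sigma> \<and> \<sigma> < t \<longrightarrow> (fst v, snd v - sy*\<sigma>) \<in> interior P"
      proof (intro allI impI)
        fix \<sigma> :: real assume "0 < \<sigma> \<and> \<sigma> < t"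
        then have "v + \<sigma> *\<^sub>R d \<in> interior P" using chord by blast
        moreover have "v + \<sigma> *\<^sub>R d = (fst v, snd v - sy*\<sigma>)" using a ad by (simp add: prod_eq_iff)
        ultimately show "(fst v, snd v - sy*\<sigma>) \<in> interior P" by simp
      qed
      show False using chord_v[OF op e sx sy M tpos pd ch pi r(1) B C(1,2)] .
    qed
  qed
qed



lemma hull3: "min (min a c) b \<le> (x::real) \<Longrightarrow> x \<le> max (max a c) b \<Longrightarrow>
   (min a c \<le> x \<and> x \<le> max a c) \<or> (min c b \<le> x \<and> x \<le> max c b)"
  by (auto simp: min_def max_def split: if_splits)

lemma main_rect:
  assumes op: "orthogonal_polygon P" and psi: "\<psi> \<in> pixels P" and p: "p \<in> interior \<psi>"
    and R: "rect g p \<subseteq> P" and p': "p' \<in> \<psi>"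
  shows "rect g p' \<subseteq> P"
  using main0[OF op psi p not_cut[OF op psi p] R] p' by blast

lemma nondeg:
  assumes op: "orthogonal_polygon P" and psi: "\<psi> \<in> pixels P" and p: "p \<in> interior \<psi>"
    and R: "rect g p \<subseteq> P" and p': "p' \<in> \<psi>"
  shows "\<not> degenerate P (rect g p')"
proof
  assume dg: "degenerate P (rect g p')"
  obtain C where C: "connected C" "C \<subseteq> interior P - cuts P" "\<psi> = closure C" "\<psi> \<subseteq> P"
    using pixel_facts[OF op psi] by blast
  have "\<not> pos_area_rect (rect g p')" using dg by (simp add: degenerate_def)
  moreover have "pos_area_rect (rect g p')" if "fst g \<noteq> fst p'" "snd g \<noteq> snd p'"
  proof -
    have "min (fst g) (fst p') < max (fst g) (fst p')" "min (snd g) (snd p') < max (snd g) (snd p')"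
      using that by (auto simp: min_def max_def split: if_splits)
    then show ?thesis unfolding pos_area_rect_def rect_def by blast
  qed
  ultimately have eq: "fst g = fst p' \<or> snd g = snd p'" by blast
  obtain r where r: "r > 0" "ball p r \<subseteq> interior \<psi>"
    using p open_contains_ball_eq[OF open_interior] by blast
  define c where "c = (if fst p = fst g then fst p + r/3 else fst p, if snd p = snd g then snd p + r/3 else snd p)"
  have c1: "fst c \<noteq> fst g" and c2: "snd c \<noteq> snd g" using r by (auto simp: c_def)
  have "dist c p \<le> \<bar>fst c - fst p\<bar> + \<bar>snd c - snd p\<bar>" by (rule dsum)
  also have "\<dots> \<le> 2*r/3" using r by (auto simp: c_def)
  finally have "dist p c < r" using r by (simp add: dist_commute)
  then have ci: "c \<in> interior \<psi>" using r by auto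
  have cpsi: "c \<in> \<psi>" using ci interior_subset by blast
  have gc: "rect g c \<subseteq> P" using main_rect[OF op psi p R cpsi] .
  have "rect c c \<subseteq> P" using cpsi C(4) by (auto simp: rect_def prod_eq_iff)
  then have cp': "rect c p' \<subseteq> P" using main_rect[OF op psi ci _ p'] by blast
  define R' where "R' = {q. min (min (fst g) (fst c)) (fst p') \<le> fst q \<and> fst q \<le> max (max (fst g) (fst c)) (fst p') \<and>
                          min (min (snd g) (snd c)) (snd p') \<le> snd q \<and> snd q \<le> max (max (snd g) (snd c)) (snd p')}"
  have "min (min (fst g) (fst c)) (fst p') < max (max (fst g) (fst c)) (fst p')"
    using c1 by (simp add: min_less_iff_disj less_max_iff_disj) linarith
  moreover have "min (min (snd g) (snd c)) (snd p') < max (max (snd g) (snd c)) (snd p')"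
    using c2 by (simp add: min_less_iff_disj less_max_iff_disj) linarith
  ultimately have pa: "pos_area_rect R'"
    unfolding pos_area_rect_def R'_def by blast
  have sub: "rect g p' \<subseteq> R'" by (auto simp: rect_def R'_def min_le_iff_disj le_max_iff_disj)
  have ne: "rect g p' \<noteq> R'"
  proof
    assume e: "rect g p' = R'"
    show False
    proof (cases "fst g = fst p'")
      case True
      have "(fst c, snd g) \<in> R'" by (simp add: R'_def min_le_iff_disj le_max_iff_disj)
      then show False using e True c1 by (auto simp: rect_def)
    next
      case False
      then have "snd g = snd p'" using eq by blast
      have "(fst g, snd c) \<in> R'" by (simp add: R'_def min_le_iff_disj le_max_iff_disj)
      then show False using e \<open>snd g = snd p'\<close> c2 by (auto simp: rect_def)
    qed
  qed
  have RP: "R' \<subseteq> P"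
  proof
    fix q assume q: "q \<in> R'"
    then have qa: "min (min (fst g) (fst c)) (fst p') \<le> fst q" "fst q \<le> max (max (fst g) (fst c)) (fst p')"
      and qb: "min (min (snd g) (snd c)) (snd p') \<le> snd q" "snd q \<le> max (max (snd g) (snd c)) (snd p')"
      by (auto simp: R'_def)
    show "q \<in> P"
    proof (cases "fst g = fst p'")
      case True
      then have x1: "min (fst g) (fst c) \<le> fst q \<and> fst q \<le> max (fst g) (fst c)"
        using qa by (auto simp: min_def max_def split: if_splits)
      then have x2: "min (fst c) (fst p') \<le> fst q \<and> fst q \<le> max (fst c) (fst p')"
        using True by (auto simp: min_def max_def split: if_splits)
      from hull3[OF qb] show ?thesis
      proof
        assume "min (snd g) (snd c) \<le> snd q \<and> snd q \<le> max (snd g) (snd c)"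
        then have "q \<in> rect g c" using x1 by (simp add: rect_def)
        then show ?thesis using gc by blast
      next
        assume "min (snd c) (snd p') \<le> snd q \<and> snd q \<le> max (snd c) (snd p')"
        then have "q \<in> rect c p'" using x2 by (simp add: rect_def)
        then show ?thesis using cp' by blast
      qed
    next
      case False
      then have True': "snd g = snd p'" using eq by blast
      then have y1: "min (snd g) (snd c) \<le> snd q \<and> snd q \<le> max (snd g) (snd c)"
        using qb by (auto simp: min_def max_def split: if_splits)
      then have y2: "min (snd c) (snd p') \<le> snd q \<and> snd q \<le> max (snd c) (snd p')"
        using True' by (auto simp: min_def max_def split: if_splits)
      from hull3[OF qa] show ?thesis
      proof
        assume "min (fst g) (fst c) \<le> fst q \<and> fst q \<le> max (fst g) (fst c)"
        then have "q \<in> rect g c" using y1 by (simp add: rect_def)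
        then show ?thesis using gc by blast
      next
        assume "min (fst c) (fst p') \<le> fst q \<and> fst q \<le> max (fst c) (fst p')"
        then have "q \<in> rect c p'" using y2 by (simp add: rect_def)
        then show ?thesis using cp' by blast
      qed
    qed
  qed
  have "\<exists>R'. pos_area_rect R' \<and> rect g p' \<subset> R' \<and> R' \<subseteq> P" using pa sub ne RP by blast
  then show False using dg by (simp add: degenerate_def)
qed

theorem lemmaA1:
  fixes P \<psi> :: "(real \<times> real) set" and p p' :: "real \<times> real" and ndeg :: bool
  assumes "orthogonal_polygon P"
    and "\<psi> \<in> pixels P"
    and "p \<in> interior \<psi>"
    and "p' \<in> \<psi>"
  shows "guarding_set ndeg P p \<subseteq> guarding_set ndeg P p'"
proof
  fix g assume "g \<in> guarding_set ndeg P p"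
  then have g: "g \<in> P" "rect g p \<subseteq> P" by (auto simp: guarding_set_def rguards_def)
  have "rect g p' \<subseteq> P" using main_rect[OF assms(1-3) g(2) assms(4)] .
  moreover have "\<not> degenerate P (rect g p')" using nondeg[OF assms(1-3) g(2) assms(4)] .
  ultimately show "g \<in> guarding_set ndeg P p'" using g(1) by (simp add: guarding_set_def rguards_def)
qed


end
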